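(* (1) Let $S$ be a simple random walk and $\overline S=T(S)$. Then (i) for all $n\ge0$, $\sigma(\overline S_j,j\le n)\vee\sigma(S_1)=\sigma(S_j,j\le n+1)$; (ii) $S_1$ is independent of $\sigma(\overline S)$. (2) Let $\overline S=(\overline S_k)_{k\ge0}$ be a simple random walk. Then (i) (on a possibly enlarged probability space) there exists a simple random walk $S$ with $T(S)=\overline S$, and consequently, with $\overline Y_n:=\max_{k\le n}\overline S_k-\overline S_n$, one has $|\overline Y_n-|S_n||\le 2$ for all $n\in\mathbb N$; (ii) the set of simple random walks $S'$ with $T(S')=\overline S$ consists (almost surely) of exactly the two elements $S$ and $-S$, where $S$ is determined by $\overline S$ together with the additional independent sign $S_1$.
   Context: A simple random walk (SRW) $S=(S_n)_{n\ge0}$ has $S_0=0$ and i.i.d. steps $X_i=S_i-S_{i-1}$ uniform on $\{-1,1\}$. The Csaki–Vincze transformation $T$: given $S$, define $\tau_0=0$, $\tau_1=\min\{i>0:S_{i-1}S_{i+1}<0\}$, $\tau_{l+1}=\min\{i>\tau_l:S_{i-1}S_{i+1}<0\}$ for $l\ge1$; for $j\ge1$ set $\overline X_j=\sum_{l\ge0}(-1)^{l+1}X_1X_{j+1}1_{\{\tau_l+1\le j\le\tau_{l+1}\}}$, and $\overline S_0=0$, $\overline S_j=\overline X_1+\dots+\overline X_j$. Then $T(S):=\overline S$. It is known (Csaki–Vincze) that $\overline S=T(S)$ is a SRW satisfying $|\max_{k\le n}\overline S_k-\overline S_n-|S_n||\le2$ for all $n$, and that $\tau_l=\min\{n\ge0:\overline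 S_n=2l\}$ for all $l\ge1$. *)

theory Defs
  imports "HOL-Probability.Probability"
begin

definition step :: "(nat \<Rightarrow> int) \<Rightarrow> nat \<Rightarrow> int" where
  "step s i = s i - s (i - 1)"

fun cv_tau :: "(nat \<Rightarrow> int) \<Rightarrow> nat \<Rightarrow> enat" where
  "cv_tau s 0 = 0"
| "cv_tau s (Suc l) =
     (if \<exists>i. enat i > cv_tau s l \<and> s (i - 1) * s (i + 1) < 0
      then enat (LEAST i. enat i > cv_tau s l \<and> s (i - 1) * s (i + 1) < 0)
      else \<infinity>)"

text \<open>Xbar_j = sum over l >= 0 of (-1)^(l+1) X_1 X_(j+1) 1{tau_l + 1 <= j <= tau_(l+1)}.
  Since tau_l >= l, only l <= j can contribute, so the sum is written over {..j}.\<close>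
definition cv_Xbar :: "(nat \<Rightarrow> int) \<Rightarrow> nat \<Rightarrow> int" where
  "cv_Xbar s j = (\<Sum>l\<in>{..j}. (-1) ^ (l + 1) * step s 1 * step s (j + 1) *
       (if cv_tau s l + 1 \<le> enat j \<and> enat j \<le> cv_tau s (Suc l) then 1 else 0))"

definition cv_T :: "(nat \<Rightarrow> int) \<Rightarrow> nat \<Rightarrow> int" where
  "cv_T s j = (\<Sum>i\<in>{1..j}. cv_Xbar s i)"

definition srw :: "'a measure \<Rightarrow> ('a \<Rightarrow> nat \<Rightarrow> int) \<Rightarrow> bool" where
  "srw M S \<longleftrightarrow> prob_space M \<and>
     (\<forall>\<omega>\<in>space M. S \<omega> 0 = 0) \<and>
     (\<forall>\<omega>\<in>space M. \<forall>i. S \<omega> (Suc i) - S \<omega> i \<in> {-1, 1}) \<and>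
     (\<forall>i. (\<lambda>\<omega>. S \<omega> (Suc i) - S \<omega> i) \<in> measurable M (count_space UNIV)) \<and>
     prob_space.indep_vars M (\<lambda>_. count_space UNIV) (\<lambda>i \<omega>. S \<omega> (Suc i) - S \<omega> i) UNIV \<and>
     (\<forall>i. distr M (count_space UNIV) (\<lambda>\<omega>. S \<omega> (Suc i) - S \<omega> i)
            = measure_pmf (pmf_of_set {-1, 1}))"

definition gen_sigma :: "'a set \<Rightarrow> ('i \<Rightarrow> 'a \<Rightarrow> int) \<Rightarrow> 'i set \<Rightarrow> 'a set set" where
  "gen_sigma \<Omega> X I = sigma_sets \<Omega> (\<Union>i\<in>I. {X i -` A \<inter> \<Omega> | A. True})"

definition run_max_gap :: "(nat \<Rightarrow> int) \<Rightarrow> nat \<Rightarrow> int" where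
  "run_max_gap s n = Max (s ` {..n}) - s n"

end

theory Submission
  imports Defs
begin

fun cnt :: "(nat \<Rightarrow> int) \<Rightarrow> nat \<Rightarrow> nat" where
  "cnt s 0 = 0"
| "cnt s (Suc j) = cnt s j + (if 0 < j \<and> s (j - 1) * s (j + 1) < 0 then 1 else 0)"

lemma cnt_le: "cnt s j \<le> j"
  by (induction j) auto

lemma cnt_mono: "i \<le> j \<Longrightarrow> cnt s i \<le> cnt s j"
  by (induction j) (auto simp: le_Suc_eq)

lemma cnt_aux: "(\<exists>i<j. 0 < i \<and> l \<le> cnt s i \<and> s (i - 1) * s (i + 1) < 0) \<longleftrightarrow> Suc l \<le> cnt s j"
proof (induction j)
  case 0 then show ?case by simp
next
  case (Suc j)
  have "(\<exists>i<Suc j. 0 < i \<and> l \<le> cnt s i \<and> s (i - 1) * s (i + 1) < 0) \<longleftrightarrow>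
        (\<exists>i<j. 0 < i \<and> l \<le> cnt s i \<and> s (i - 1) * s (i + 1) < 0) \<or>
        (0 < j \<and> l \<le> cnt s j \<and> s (j - 1) * s (j + 1) < 0)"
    by (auto simp: less_Suc_eq)
  then show ?case using Suc by auto
qed

lemma tau_lt: "cv_tau s l < enat j \<longleftrightarrow> 0 < j \<and> l \<le> cnt s j"
proof (induction l arbitrary: j)
  case 0 then show ?case by (simp add: zero_enat_def)
next
  case (Suc l)
  let ?P = "\<lambda>i. enat i > cv_tau s l \<and> s (i - 1) * s (i + 1) < 0"
  have "cv_tau s (Suc l) < enat j \<longleftrightarrow> (\<exists>i<j. ?P i)"
  proof (cases "\<exists>i. ?P i")
    case True
    then have eq: "cv_tau s (Suc l) = enat (LEAST i. ?P i)" by simp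
    have L: "?P (LEAST i. ?P i)" using True by (rule LeastI_ex)
    have L2: "\<And>i. ?P i \<Longrightarrow> (LEAST i. ?P i) \<le> i" by (rule Least_le)
    show ?thesis unfolding eq
    proof
      assume "enat (LEAST i. ?P i) < enat j" then show "\<exists>i<j. ?P i" using L by auto
    next
      assume "\<exists>i<j. ?P i" then obtain i where "i < j" "?P i" by blast
      then show "enat (LEAST i. ?P i) < enat j" using L2[of i] by simp
    qed
  next
    case False
    then have "cv_tau s (Suc l) = \<infinity>" by simp
    then show ?thesis using False by simp
  qed
  also have "\<dots> \<longleftrightarrow> (\<exists>i<j. 0 < i \<and> l \<le> cnt s i \<and> s (i - 1) * s (i + 1) < 0)"
    using Suc by auto
  also have "\<dots> \<longleftrightarrow> 0 < j \<and> Suc l \<le> cnt s j"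
    using cnt_aux[of j l s] by auto
  finally show ?case .
qed

definition xb :: "(nat \<Rightarrow> int) \<Rightarrow> nat \<Rightarrow> int" where
  "xb s j = (-1) ^ (cnt s j + 1) * step s 1 * step s (j + 1)"

lemma enat_plus1_le: "a + 1 \<le> enat j \<longleftrightarrow> a < enat j"
  by (cases a) (auto simp: one_enat_def)

lemma Xbar_eq: assumes "0 < j" shows "cv_Xbar s j = xb s j"
proof -
  have ind: "(cv_tau s l + 1 \<le> enat j \<and> enat j \<le> cv_tau s (Suc l)) \<longleftrightarrow> l = cnt s j" for l
  proof -
    have 1: "cv_tau s l + 1 \<le> enat j \<longleftrightarrow> l \<le> cnt s j"
      using tau_lt[of s l j] assms by (simp add: enat_plus1_le)
    have 2: "enat j \<le> cv_tau s (Suc l) \<longleftrightarrow> \<not> Suc l \<le> cnt s j"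
      using tau_lt[of s "Suc l" j] assms not_less[of "cv_tau s (Suc l)" "enat j"] by simp
    show ?thesis unfolding 1 2 by auto
  qed
  have "cv_Xbar s j = (\<Sum>l\<in>{..j}. if l = cnt s j then (-1) ^ (l + 1) * step s 1 * step s (j + 1) else 0)"
    unfolding cv_Xbar_def by (intro sum.cong refl) (simp only: ind, auto)
  also have "\<dots> = xb s j" using cnt_le[of s j] by (simp add: xb_def)
  finally show ?thesis .
qed

lemma cvT_xb: "cv_T s n = (\<Sum>i\<in>{1..n}. xb s i)"
  unfolding cv_T_def by (intro sum.cong refl) (simp add: Xbar_eq)

lemma cvT_0[simp]: "cv_T s 0 = 0" by (simp add: cv_T_def)

lemma cvT_Suc: "cv_T s (Suc n) = cv_T s n + xb s (Suc n)"
  unfolding cvT_xb by (simp add: add.commute)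


lemma ar1:
  fixes a b c \<sigma> :: int
  assumes "\<sigma> \<in> {-1,1}" "b - a \<in> {-1,1}" "c - b \<in> {-1,1}" "b * \<sigma> \<ge> 0" "b = 0 \<longrightarrow> a * \<sigma> > 0"
  shows "c * (if a * c < 0 then - \<sigma> else \<sigma>) \<ge> 0 \<and> (c = 0 \<longrightarrow> b * (if a * c < 0 then - \<sigma> else \<sigma>) > 0)"
proof -
  consider "b > 0" | "b < 0" | "b = 0" by linarith
  then show ?thesis
  proof cases
    case 1
    then have "a \<ge> 0" "c \<ge> 0" using assms by auto
    then have "a * c \<ge> 0" by simp
    then show ?thesis using assms 1 by auto
  next
    case 2
    then have "a \<le> 0" "c \<le> 0" using assms by auto
    then have "a * c \<ge> 0" by (simp add: zero_le_mult_iff)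
    then show ?thesis using assms 2 by auto
  next
    case 3
    then have "a \<in> {-1,1}" "c \<in> {-1,1}" using assms by auto
    then show ?thesis using assms 3 by auto
  qed
qed

lemma ar2:
  fixes a b c \<sigma> :: int
  assumes "\<sigma> \<in> {-1,1}" "b - a \<in> {-1,1}" "c - b \<in> {-1,1}" "b * \<sigma> \<ge> 0" "b = 0 \<longrightarrow> a * \<sigma> > 0"
  shows "- \<sigma> * (c - b) = \<bar>b\<bar> - \<bar>c\<bar> + 2 * (if a * c < 0 then 1 else 0)"
proof -
  consider "b > 0" | "b < 0" | "b = 0" by linarith
  then show ?thesis
  proof cases
    case 1
    then have "a \<ge> 0" "c \<ge> 0" using assms by auto
    then have "a * c \<ge> 0" by simp
    then show ?thesis using assms 1 by auto
  next
    case 2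
    then have "a \<le> 0" "c \<le> 0" using assms by auto
    then have "a * c \<ge> 0" by (simp add: zero_le_mult_iff)
    then show ?thesis using assms 2 by auto
  next
    case 3
    then have "a \<in> {-1,1}" "c \<in> {-1,1}" using assms by auto
    then show ?thesis using assms 3 by auto
  qed
qed


definition pm :: "(nat \<Rightarrow> int) \<Rightarrow> bool" where
  "pm s \<longleftrightarrow> s 0 = 0 \<and> (\<forall>i. s (Suc i) - s i \<in> {-1, 1})"

lemma pm_s1: "pm s \<Longrightarrow> s 1 \<in> {-1,1}"
  unfolding pm_def by (metis One_nat_def diff_zero)

lemma sgn_pow: "((-1::int) ^ n) \<in> {-1,1}"
  by (induction n) auto

lemma pm1_mult: "(x::int) \<in> {-1,1} \<Longrightarrow> y \<in> {-1,1} \<Longrightarrow> x * y \<in> {-1,1}"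
  by auto

lemma side_inv:
  assumes "pm s"
  shows "s (Suc j) * ((-1)^cnt s (Suc j) * s 1) \<ge> 0 \<and>
         (s (Suc j) = 0 \<longrightarrow> s j * ((-1)^cnt s (Suc j) * s 1) > 0)"
proof (induction j)
  case 0
  have "s 1 \<in> {-1,1}" using pm_s1[OF assms] .
  moreover have "s 0 = 0" using assms by (simp add: pm_def)
  ultimately show ?case by auto
next
  case (Suc j)
  let ?\<sigma> = "(-1)^cnt s (Suc j) * s 1"
  have sg: "?\<sigma> \<in> {-1,1}" using pm1_mult[OF sgn_pow pm_s1[OF assms]] .
  have st: "s (Suc j) - s j \<in> {-1,1}" "s (Suc (Suc j)) - s (Suc j) \<in> {-1,1}"
    using assms by (auto simp: pm_def)
  have c: "cnt s (Suc (Suc j)) = cnt s (Suc j) + (if s j * s (Suc (Suc j)) < 0 then 1 else 0)"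
    by simp
  have e: "(-1)^cnt s (Suc (Suc j)) * s 1 = (if s j * s (Suc (Suc j)) < 0 then - ?\<sigma> else ?\<sigma>)"
    unfolding c by auto
  show ?case unfolding e
    using ar1[OF sg st Suc[THEN conjunct1] Suc[THEN conjunct2]] by simp
qed

lemma xb_abs:
  assumes "pm s"
  shows "xb s (Suc j) = \<bar>s (Suc j)\<bar> - \<bar>s (Suc (Suc j))\<bar> + 2 * (if s j * s (Suc (Suc j)) < 0 then 1 else 0)"
proof -
  let ?\<sigma> = "(-1)^cnt s (Suc j) * s 1"
  have sg: "?\<sigma> \<in> {-1,1}" using pm1_mult[OF sgn_pow pm_s1[OF assms]] .
  have st: "s (Suc j) - s j \<in> {-1,1}" "s (Suc (Suc j)) - s (Suc j) \<in> {-1,1}"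
    using assms by (auto simp: pm_def)
  have s0: "s 0 = 0" using assms by (simp add: pm_def)
  have "xb s (Suc j) = - ?\<sigma> * (s (Suc (Suc j)) - s (Suc j))"
    by (simp add: xb_def step_def s0)
  also have "\<dots> = \<bar>s (Suc j)\<bar> - \<bar>s (Suc (Suc j))\<bar> + 2 * (if s j * s (Suc (Suc j)) < 0 then 1 else 0)"
    using ar2[OF sg st side_inv[OF assms, of j, THEN conjunct1] side_inv[OF assms, of j, THEN conjunct2]] .
  finally show ?thesis .
qed

lemma cvT_formula:
  assumes "pm s"
  shows "cv_T s n = 1 - \<bar>s (Suc n)\<bar> + 2 * int (cnt s (Suc n))"
proof (induction n)
  case 0
  show ?case using pm_s1[OF assms] by auto
next
  case (Suc n)
  show ?case unfolding cvT_Suc Suc xb_abs[OF assms] by simp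
qed

lemma cnt_local: "(\<forall>i\<le>j. s i = s' i) \<Longrightarrow> cnt s j = cnt s' j"
proof (induction j)
  case 0 then show ?case by simp
next
  case (Suc j)
  then show ?case by simp
qed

lemma xb_local: "(\<forall>i\<le>Suc j. s i = s' i) \<Longrightarrow> xb s j = xb s' j"
  unfolding xb_def step_def using cnt_local[of j s s'] by simp

lemma cvT_local: "(\<forall>i\<le>Suc n. s i = s' i) \<Longrightarrow> cv_T s n = cv_T s' n"
  unfolding cvT_xb by (intro sum.cong refl xb_local) auto

lemma cnt_neg: "cnt (\<lambda>i. - s i) j = cnt s j"
  by (induction j) auto

lemma xb_neg: "xb (\<lambda>i. - s i) j = xb s j"
  unfolding xb_def step_def cnt_neg by (simp add: algebra_simps)

lemma cvT_neg: "cv_T (\<lambda>i. - s i) = cv_T s"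
  by (rule ext) (simp add: cvT_xb xb_neg)

lemma pm_neg: "pm s \<Longrightarrow> pm (\<lambda>i. - s i)"
  unfolding pm_def by (auto simp: algebra_simps) (metis insert_iff minus_diff_eq singletonD)+


lemma cross_zero:
  assumes "pm s" "s j * s (Suc (Suc j)) < 0"
  shows "s (Suc j) = 0" "\<bar>s (Suc (Suc j))\<bar> = 1"
proof -
  have st: "s (Suc j) - s j \<in> {-1,1}" "s (Suc (Suc j)) - s (Suc j) \<in> {-1,1}"
    using assms by (auto simp: pm_def)
  have "\<not> (s j \<ge> 0 \<and> s (Suc (Suc j)) \<ge> 0)" using assms(2)
    by (metis mult_nonneg_nonneg not_less)
  moreover have "\<not> (s j \<le> 0 \<and> s (Suc (Suc j)) \<le> 0)" using assms(2)
    by (metis mult_nonpos_nonpos not_less)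
  ultimately show "s (Suc j) = 0" "\<bar>s (Suc (Suc j))\<bar> = 1" using st by auto
qed

lemma hit_2K:
  assumes "pm s"
  shows "\<exists>i\<le>n. cv_T s i = 2 * int (cnt s (Suc n))"
proof (induction n)
  case 0 then show ?case by simp
next
  case (Suc n)
  show ?case
  proof (cases "s n * s (Suc (Suc n)) < 0")
    case True
    have c: "cnt s (Suc (Suc n)) = cnt s (Suc n) + 1" using True by simp
    have "cv_T s (Suc n) = 2 * int (cnt s (Suc (Suc n)))"
      unfolding cvT_formula[OF assms] using cross_zero[OF assms True] by simp
    then show ?thesis by blast
  next
    case False
    then have "cnt s (Suc (Suc n)) = cnt s (Suc n)" by simp
    then show ?thesis using Suc by (metis le_Suc_eq)
  qed
qed

lemma gap_bound:
  assumes "pm s"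
  shows "\<bar>run_max_gap (cv_T s) n - \<bar>s n\<bar>\<bar> \<le> 2"
proof -
  let ?K = "int (cnt s (Suc n))"
  let ?M = "Max (cv_T s ` {..n})"
  have ub: "cv_T s k \<le> 1 + 2 * ?K" if "k \<le> n" for k
  proof -
    have "cnt s (Suc k) \<le> cnt s (Suc n)" using that by (intro cnt_mono) simp
    then show ?thesis unfolding cvT_formula[OF assms] by simp
  qed
  have "?M \<in> cv_T s ` {..n}" by (intro Max_in) auto
  then have M1: "?M \<le> 1 + 2 * ?K" using ub by auto
  obtain i where "i \<le> n" "cv_T s i = 2 * ?K" using hit_2K[OF assms] by blast
  moreover have "cv_T s i \<le> ?M" by (rule Max_ge) (use \<open>i \<le> n\<close> in auto)
  ultimately have M2: "2 * ?K \<le> ?M" by linarith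
  have bn: "cv_T s n = 1 - \<bar>s (Suc n)\<bar> + 2 * ?K" by (rule cvT_formula[OF assms])
  have "s (Suc n) - s n \<in> {-1,1}" using assms by (auto simp: pm_def)
  then have "\<bar>\<bar>s (Suc n)\<bar> - \<bar>s n\<bar>\<bar> \<le> 1" by auto
  then show ?thesis unfolding run_max_gap_def using M1 M2 bn by linarith
qed

fun st :: "(nat \<Rightarrow> int) \<Rightarrow> int \<Rightarrow> nat \<Rightarrow> int \<times> int \<times> nat" where
  "st b e 0 = (0, e, 0)"
| "st b e (Suc j) = (case st b e j of (a, x, c) \<Rightarrow>
     (let y = x + (-1)^(c+1) * e * (b (Suc j) - b j) in
      (x, y, c + (if a * y < 0 then 1 else 0))))"

definition cvinv :: "(nat \<Rightarrow> int) \<Rightarrow> int \<Rightarrow> nat \<Rightarrow> int" where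
  "cvinv b e i = fst (st b e i)"

lemma st_fst_snd: "fst (snd (st b e j)) = cvinv b e (Suc j)"
proof -
  obtain a x c where abc: "st b e j = (a, x, c)" by (metis prod_cases3)
  then show ?thesis unfolding cvinv_def by (simp add: Let_def)
qed

lemma st_cnt: "snd (snd (st b e j)) = cnt (cvinv b e) (Suc j)"
proof (induction j)
  case 0 then show ?case by (simp add: cvinv_def)
next
  case (Suc j)
  obtain a x c where abc: "st b e j = (a, x, c)" by (metis prod_cases3)
  have a: "a = cvinv b e j" using abc by (simp add: cvinv_def)
  have x: "x = cvinv b e (Suc j)" using abc st_fst_snd[of b e j] by simp
  have c: "c = cnt (cvinv b e) (Suc j)" using abc Suc by simp
  have y: "cvinv b e (Suc (Suc j)) = x + (-1)^(c+1) * e * (b (Suc j) - b j)"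
    using st_fst_snd[of b e "Suc j"] abc by (simp add: Let_def)
  show ?case using abc a c y by (simp add: Let_def)
qed

lemma inv_0[simp]: "cvinv b e 0 = 0" by (simp add: cvinv_def)
lemma inv_1[simp]: "cvinv b e (Suc 0) = e" by (simp add: cvinv_def)

lemma inv_SS: "cvinv b e (Suc (Suc j)) = cvinv b e (Suc j) + (-1)^(cnt (cvinv b e) (Suc j) + 1) * e * (b (Suc j) - b j)"
proof -
  obtain a x c where abc: "st b e j = (a, x, c)" by (metis prod_cases3)
  have x: "x = cvinv b e (Suc j)" using abc st_fst_snd[of b e j] by simp
  have c: "c = cnt (cvinv b e) (Suc j)" using abc st_cnt[of b e j] by simp
  show ?thesis using st_fst_snd[of b e "Suc j"] abc x c by (simp add: Let_def)
qed

lemma xb_inv: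
  assumes "e \<in> {-1,1}"
  shows "xb (cvinv b e) (Suc j) = b (Suc j) - b j"
proof -
  define q where "q = ((-1::int)^(cnt (cvinv b e) (Suc j) + 1))"
  define d where "d = b (Suc j) - b j"
  have qq: "q * q = 1" unfolding q_def
    by (metis power_add[symmetric] mult_2 power_mult power_minus1_even power_one mult.commute)
  have ee: "e * e = 1" using assms by auto
  have "xb (cvinv b e) (Suc j) = q * e * (q * e * d)"
    unfolding xb_def step_def q_def d_def by (simp del: cnt.simps add: inv_SS)
  also have "\<dots> = (q * q) * (e * e) * d" by (simp add: algebra_simps)
  finally show ?thesis using qq ee d_def by simp
qed

lemma cvT_inv:
  assumes "e \<in> {-1,1}" "b 0 = 0"
  shows "cv_T (cvinv b e) n = b n"
proof (induction n)
  case 0 then show ?case using assms by simp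
next
  case (Suc n) then show ?case unfolding cvT_Suc xb_inv[OF assms(1)] by simp
qed

lemma pm_inv:
  assumes "e \<in> {-1,1}" "pm b"
  shows "pm (cvinv b e)"
  unfolding pm_def
proof (intro conjI allI)
  fix i
  show "cvinv b e (Suc i) - cvinv b e i \<in> {-1,1}"
  proof (cases i)
    case 0 then show ?thesis using assms by simp
  next
    case (Suc j)
    have "b (Suc j) - b j \<in> {-1,1}" using assms by (simp add: pm_def)
    then have "(-1)^(cnt (cvinv b e) (Suc j) + 1) * e * (b (Suc j) - b j) \<in> {-1,1}"
      using pm1_mult[OF pm1_mult[OF sgn_pow assms(1)]] by blast
    then show ?thesis unfolding Suc inv_SS by (simp del: cnt.simps)
  qed
qed simp

lemma st_local: "(\<forall>i\<le>j. b i = b' i) \<Longrightarrow> st b e j = st b' e j"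
  by (induction j) (auto simp: Let_def)

lemma inv_local: "(\<forall>i<j. b i = b' i) \<Longrightarrow> cvinv b e j = cvinv b' e j"
proof (cases j)
  case 0 then show ?thesis by simp
next
  case (Suc k)
  assume "\<forall>i<j. b i = b' i"
  then have "st b e k = st b' e k" using Suc by (intro st_local) auto
  then show ?thesis using st_fst_snd[of b e k] st_fst_snd[of b' e k] Suc by simp
qed

lemma inj_local:
  assumes "s 0 = 0" "s' 0 = 0" "s 1 = s' 1" "s 1 \<noteq> 0" "\<forall>j\<le>n. cv_T s j = cv_T s' j"
  shows "\<forall>j\<le>Suc n. s j = s' j"
  using assms(5)
proof (induction n)
  case 0 then show ?case using assms by (auto simp: le_Suc_eq)
next
  case (Suc n)
  then have IH: "\<forall>j\<le>Suc n. s j = s' j" by auto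
  have "xb s (Suc n) = xb s' (Suc n)" using Suc.prems cvT_Suc[of s n] cvT_Suc[of s' n] by simp
  moreover have "cnt s (Suc n) = cnt s' (Suc n)" using IH by (intro cnt_local) auto
  ultimately have "s (Suc (Suc n)) = s' (Suc (Suc n))"
    using IH assms(1-4) unfolding xb_def step_def by simp
  then show ?case using IH by (auto simp: le_Suc_eq)
qed

lemma inj_global:
  assumes "s 0 = 0" "s' 0 = 0" "s 1 = s' 1" "s 1 \<noteq> 0" "cv_T s = cv_T s'"
  shows "s = s'"
proof
  fix j
  show "s j = s' j" using inj_local[OF assms(1-4), of j] assms(5) by auto
qed

lemma recover:
  assumes "pm s" shows "cvinv (cv_T s) (s 1) = s"
proof (rule inj_global)
  have e: "s 1 \<in> {-1,1}" by (rule pm_s1[OF assms])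
  show "cv_T (cvinv (cv_T s) (s 1)) = cv_T s"
    by (rule ext, rule cvT_inv[OF e]) simp
  show "cvinv (cv_T s) (s 1) 1 \<noteq> 0" using pm_s1[OF assms] by auto
qed (use assms in \<open>auto simp: pm_def\<close>)


lemma meas_fd:
  fixes Y :: "'i \<Rightarrow> 'a \<Rightarrow> int" and g :: "('i \<Rightarrow> int) \<Rightarrow> 'b"
  assumes J: "finite J" and Y: "\<And>i. i \<in> J \<Longrightarrow> Y i \<in> measurable N (count_space UNIV)"
    and X: "\<And>\<omega>. \<omega> \<in> space N \<Longrightarrow> X \<omega> = g (\<lambda>i. if i \<in> J then Y i \<omega> else 0)"
  shows "X \<in> measurable N (count_space UNIV)"
proof (rule measurableI)
  fix B :: "'b set"
  define pvec where "pvec \<omega> = (\<lambda>i. if i \<in> J then Y i \<omega> else 0)" for \<omega>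
  define V where "V = (\<lambda>f i. if i \<in> J then f i else (0::int)) ` (PiE J (\<lambda>_. UNIV::int set))"
  have cV: "countable V" unfolding V_def
    by (intro countable_image countable_PiE J) auto
  have vV: "pvec \<omega> \<in> V" for \<omega>
    unfolding V_def pvec_def
    by (rule image_eqI[where x="restrict (\<lambda>i. Y i \<omega>) J"]) auto
  have eq: "X -` B \<inter> space N = (\<Union>v\<in>V \<inter> g -` B. {\<omega>\<in>space N. \<forall>i\<in>J. Y i \<omega> = v i})"
  proof (intro equalityI subsetI)
    fix \<omega> assume "\<omega> \<in> X -` B \<inter> space N"
    then show "\<omega> \<in> (\<Union>v\<in>V \<inter> g -` B. {\<omega>\<in>space N. \<forall>i\<in>J. Y i \<omega> = v i})"
      using vV[of \<omega>] X[of \<omega>] by (auto intro!: bexI[where x="pvec \<omega>"] simp: pvec_def)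
  next
    fix \<omega> assume "\<omega> \<in> (\<Union>v\<in>V \<inter> g -` B. {\<omega>\<in>space N. \<forall>i\<in>J. Y i \<omega> = v i})"
    then obtain v where v: "v \<in> V" "g v \<in> B" "\<omega> \<in> space N" "\<forall>i\<in>J. Y i \<omega> = v i" by auto
    have "v = pvec \<omega>" using v(1,4) unfolding V_def pvec_def by auto
    then show "\<omega> \<in> X -` B \<inter> space N" using v X[of \<omega>] by (simp add: pvec_def)
  qed
  show "X -` B \<inter> space N \<in> sets N" unfolding eq
  proof (rule sets.countable_UN'')
    show "countable (V \<inter> g -` B)" using cV by auto
    fix v
    show "{\<omega>\<in>space N. \<forall>i\<in>J. Y i \<omega> = v i} \<in> sets N"
    proof (rule sets.sets_Collect_finite_All[OF _ J])
      fix i assume "i \<in> J"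
      have "{\<omega>\<in>space N. Y i \<omega> = v i} = Y i -` {v i} \<inter> space N" by auto
      then show "{\<omega>\<in>space N. Y i \<omega> = v i} \<in> sets N"
        using measurable_sets[OF Y[OF \<open>i\<in>J\<close>], of "{v i}"] by simp
    qed
  qed
qed simp

lemma gen_sigma_in:
  fixes Y :: "'i \<Rightarrow> 'a \<Rightarrow> int"
  assumes J: "finite J" "J \<subseteq> I"
    and X: "\<And>\<omega>. \<omega> \<in> \<Omega> \<Longrightarrow> X \<omega> = g (\<lambda>i. if i \<in> J then Y i \<omega> else 0)"
  shows "X -` A \<inter> \<Omega> \<in> gen_sigma \<Omega> Y I"
proof -
  define G where "G = (\<Union>i\<in>I. {Y i -` A \<inter> \<Omega> | A. True})"
  define N where "N = sigma \<Omega> G"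
  have GP: "G \<subseteq> Pow \<Omega>" unfolding G_def by auto
  have sN: "space N = \<Omega>" "sets N = gen_sigma \<Omega> Y I"
    unfolding N_def gen_sigma_def G_def[symmetric] using GP by auto
  have "Y i \<in> measurable N (count_space UNIV)" if "i \<in> I" for i
  proof (rule measurableI)
    fix A :: "int set"
    have "Y i -` A \<inter> \<Omega> \<in> G" unfolding G_def using that by auto
    then show "Y i -` A \<inter> space N \<in> sets N" unfolding sN gen_sigma_def G_def[symmetric] by auto
  qed simp
  then have "X \<in> measurable N (count_space UNIV)"
    using J by (intro meas_fd[where g=g and J=J and Y=Y]) (auto simp: sN X)
  from measurable_sets[OF this, of A] show ?thesis by (simp add: sN)
qed


definition fdist :: "'a measure \<Rightarrow> (nat \<Rightarrow> 'a \<Rightarrow> int) \<Rightarrow> bool" where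
  "fdist M \<xi> \<longleftrightarrow> (\<forall>n w. (\<forall>i<n. w i \<in> {-1,1}) \<longrightarrow>
      measure M {\<omega>\<in>space M. \<forall>i<n. \<xi> i \<omega> = w i} = 1 / 2 ^ n)"

lemma card_pm1: "card {-1, 1::int} = 2" by simp

context prob_space begin

lemma fdist_srw:
  assumes "srw M S"
  shows "fdist M (\<lambda>i \<omega>. S \<omega> (Suc i) - S \<omega> i)"
  unfolding fdist_def
proof (intro allI impI)
  fix n and w :: "nat \<Rightarrow> int"
  assume w: "\<forall>i<n. w i \<in> {-1,1}"
  define \<xi> where "\<xi> = (\<lambda>i \<omega>. S \<omega> (Suc i) - S \<omega> i)"
  have meas: "\<xi> i \<in> measurable M (count_space UNIV)" for i
    using assms unfolding srw_def \<xi>_def by auto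
  have ind: "indep_vars (\<lambda>_. count_space UNIV) \<xi> UNIV"
    using assms unfolding srw_def \<xi>_def by auto
  have single: "prob (\<xi> i -` {a} \<inter> space M) = (if a \<in> {-1,1} then 1/2 else 0)" for i a
  proof -
    have "prob (\<xi> i -` {a} \<inter> space M) = measure (distr M (count_space UNIV) (\<xi> i)) {a}"
      by (rule measure_distr[symmetric]) (auto simp: meas)
    also have "\<dots> = measure (measure_pmf (pmf_of_set {-1,1::int})) {a}"
      using assms unfolding srw_def \<xi>_def by auto
    also have "\<dots> = (if a \<in> {-1,1} then 1/2 else 0)"
      by (simp add: measure_pmf_single)
    finally show ?thesis .
  qed
  show "prob {\<omega>\<in>space M. \<forall>i<n. \<xi> i \<omega> = w i} = 1 / 2 ^ n"
  proof (cases "n = 0")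
    case True then show ?thesis by (simp add: prob_space)
  next
    case False
    have eq: "{\<omega>\<in>space M. \<forall>i<n. \<xi> i \<omega> = w i} = (\<Inter>i\<in>{..<n}. \<xi> i -` {w i} \<inter> space M)"
      using False by auto
    have "prob (\<Inter>i\<in>{..<n}. \<xi> i -` {w i} \<inter> space M) = (\<Prod>i\<in>{..<n}. prob (\<xi> i -` {w i} \<inter> space M))"
      by (rule indep_varsD[OF ind]) (use False in auto)
    also have "\<dots> = (\<Prod>i\<in>{..<n}. 1/2)"
      by (intro prod.cong refl) (use w single in auto)
    finally show ?thesis unfolding eq by (simp add: power_one_over)
  qed
qed

lemma fdist_marg_aux:
  assumes fd: "fdist M \<xi>" and meas: "\<And>i. \<xi> i \<in> measurable M (count_space UNIV)"
    and pmv: "\<And>\<omega> i. \<omega> \<in> space M \<Longrightarrow> \<xi> i \<omega> \<in> {-1,1}"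
  shows "\<forall>J v. J \<subseteq> {..<n} \<longrightarrow> card ({..<n} - J) = k \<longrightarrow> (\<forall>j\<in>J. v j \<in> {-1,1}) \<longrightarrow>
     prob {\<omega>\<in>space M. \<forall>j\<in>J. \<xi> j \<omega> = v j} = 1 / 2 ^ card J"
proof (induction k)
  case 0
  show ?case
  proof (intro allI impI)
    fix J v assume J: "J \<subseteq> {..<n}" "card ({..<n} - J) = 0" "\<forall>j\<in>J. v j \<in> {-1::int,1}"
    then have JJ: "J = {..<n}" by auto
    have "{\<omega>\<in>space M. \<forall>j\<in>J. \<xi> j \<omega> = v j} = {\<omega>\<in>space M. \<forall>i<n. \<xi> i \<omega> = v i}"
      using JJ by auto
    moreover have "prob {\<omega>\<in>space M. \<forall>i<n. \<xi> i \<omega> = v i} = 1 / 2 ^ n"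
      using fd[unfolded fdist_def, rule_format, of n v] J(3) JJ by auto
    ultimately show "prob {\<omega>\<in>space M. \<forall>j\<in>J. \<xi> j \<omega> = v j} = 1 / 2 ^ card J"
      using JJ by simp
  qed
next
  case (Suc k)
  show ?case
  proof (intro allI impI)
    fix J v assume J: "J \<subseteq> {..<n}" "card ({..<n} - J) = Suc k" "\<forall>j\<in>J. v j \<in> {-1::int,1}"
    then obtain m where m: "m \<in> {..<n} - J" by (metis card.empty ex_in_conv nat.distinct(1))
    have fJ: "finite J" using J(1) finite_subset by blast
    let ?J = "insert m J"
    have c: "card ({..<n} - ?J) = k" using J(2) m
      by (metis Diff_insert card_Diff_singleton diff_Suc_1 finite_Diff finite_lessThan)
    have cJ: "card ?J = Suc (card J)" using m fJ by simp
    have ev: "{\<omega>\<in>space M. \<forall>j\<in>K. \<xi> j \<omega> = u j} \<in> events" if "finite K" for K u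
    proof (rule sets.sets_Collect_finite_All[OF _ that])
      fix i
      have "{\<omega>\<in>space M. \<xi> i \<omega> = u i} = \<xi> i -` {u i} \<inter> space M" by auto
      then show "{\<omega>\<in>space M. \<xi> i \<omega> = u i} \<in> events" using measurable_sets[OF meas, of "{u i}" i] by simp
    qed
    have split: "{\<omega>\<in>space M. \<forall>j\<in>J. \<xi> j \<omega> = v j} =
        {\<omega>\<in>space M. \<forall>j\<in>?J. \<xi> j \<omega> = (v(m:=1)) j} \<union> {\<omega>\<in>space M. \<forall>j\<in>?J. \<xi> j \<omega> = (v(m:=-1)) j}"
      using m pmv by (auto split: if_splits)
    have IH1: "prob {\<omega>\<in>space M. \<forall>j\<in>?J. \<xi> j \<omega> = (v(m:=1)) j} = 1 / 2 ^ card ?J"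
      by (rule Suc.IH[rule_format]) (use J m c in auto)
    have IH2: "prob {\<omega>\<in>space M. \<forall>j\<in>?J. \<xi> j \<omega> = (v(m:=-1)) j} = 1 / 2 ^ card ?J"
      by (rule Suc.IH[rule_format]) (use J m c in auto)
    show "prob {\<omega>\<in>space M. \<forall>j\<in>J. \<xi> j \<omega> = v j} = 1 / 2 ^ card J"
      unfolding split
    proof (subst finite_measure_Union)
      show "{\<omega>\<in>space M. \<forall>j\<in>?J. \<xi> j \<omega> = (v(m:=1)) j} \<in> events" using ev[of ?J] fJ by blast
      show "{\<omega>\<in>space M. \<forall>j\<in>?J. \<xi> j \<omega> = (v(m:=-1)) j} \<in> events" using ev[of ?J] fJ by blast
      show "{\<omega>\<in>space M. \<forall>j\<in>?J. \<xi> j \<omega> = (v(m:=1)) j} \<inter> {\<omega>\<in>space M. \<forall>j\<in>?J. \<xi> j \<omega> = (v(m:=-1)) j} = {}"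
        by auto
    qed (simp only: IH1 IH2 cJ, simp)
  qed
qed

lemma fdist_marg:
  assumes fd: "fdist M \<xi>" and meas: "\<And>i. \<xi> i \<in> measurable M (count_space UNIV)"
    and pmv: "\<And>\<omega> i. \<omega> \<in> space M \<Longrightarrow> \<xi> i \<omega> \<in> {-1,1}" and J: "finite J"
  shows "prob {\<omega>\<in>space M. \<forall>j\<in>J. \<xi> j \<omega> = v j} = (if \<forall>j\<in>J. v j \<in> {-1,1} then 1 / 2 ^ card J else 0)"
proof (cases "\<forall>j\<in>J. v j \<in> {-1,1}")
  case True
  obtain n where "J \<subseteq> {..<n}" using J by (meson finite_nat_iff_bounded subset_eq lessThan_iff)
  then show ?thesis using fdist_marg_aux[OF fd meas pmv, of n "card ({..<n} - J)"] True by auto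
next
  case False
  then obtain j where j: "j \<in> J" "v j \<notin> {-1,1}" by blast
  have E: "{\<omega>\<in>space M. \<forall>j\<in>J. \<xi> j \<omega> = v j} = {}"
  proof (rule ccontr)
    assume "{\<omega>\<in>space M. \<forall>j\<in>J. \<xi> j \<omega> = v j} \<noteq> {}"
    then obtain \<omega> where "\<omega> \<in> space M" "\<forall>j\<in>J. \<xi> j \<omega> = v j" by blast
    then show False using pmv[of \<omega> j] j by auto
  qed
  show ?thesis using False by (subst E) simp
qed

end


context prob_space begin

lemma fdist_distr:
  assumes fd: "fdist M \<xi>" and meas: "\<And>i. \<xi> i \<in> measurable M (count_space UNIV)"
    and pmv: "\<And>\<omega> i. \<omega> \<in> space M \<Longrightarrow> \<xi> i \<omega> \<in> {-1,1}"
  shows "distr M (count_space UNIV) (\<xi> i) = measure_pmf (pmf_of_set {-1,1})"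
proof -
  have eq: "emeasure (distr M (count_space UNIV) (\<xi> i)) {a} = emeasure (measure_pmf (pmf_of_set {-1,1::int})) {a}" for a :: int
  proof -
  have "emeasure (distr M (count_space UNIV) (\<xi> i)) {a} = emeasure M (\<xi> i -` {a} \<inter> space M)"
    by (rule emeasure_distr) (auto simp: meas)
  also have "\<dots> = ennreal (prob (\<xi> i -` {a} \<inter> space M))" by (simp add: emeasure_eq_measure)
  also have "\<xi> i -` {a} \<inter> space M = {\<omega>\<in>space M. \<forall>j\<in>{i}. \<xi> j \<omega> = (\<lambda>_. a) j}" by auto
  also have "prob \<dots> = (if a \<in> {-1,1} then 1/2 else 0)"
    using fdist_marg[OF fd meas pmv, of "{i}" "\<lambda>_. a"] by simp
  also have "ennreal \<dots> = emeasure (measure_pmf (pmf_of_set {-1,1::int})) {a}"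
    by (simp add: emeasure_pmf_single)
  finally show ?thesis .
  qed
  show ?thesis by (rule measure_eqI_countable[where A=UNIV]) (auto simp: eq)
qed

lemma fdist_indep:
  assumes fd: "fdist M \<xi>" and meas: "\<And>i. \<xi> i \<in> measurable M (count_space UNIV)"
    and pmv: "\<And>\<omega> i. \<omega> \<in> space M \<Longrightarrow> \<xi> i \<omega> \<in> {-1,1}"
  shows "indep_vars (\<lambda>_. count_space UNIV) \<xi> UNIV"
proof -
  define G where "G i = {\<xi> i -` {a} \<inter> space M | a. True}" for i
  have Gev: "G i \<subseteq> events" for i unfolding G_def using measurable_sets[OF meas] by auto
  have stable: "Int_stable (G i)" for i
  proof (rule Int_stableI)
    fix A B assume "A \<in> G i" "B \<in> G i"
    then obtain a b where ab: "A = \<xi> i -` {a} \<inter> space M" "B = \<xi> i -` {b} \<inter> space M"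
      unfolding G_def by auto
    show "A \<inter> B \<in> G i"
    proof (cases "a = b")
      case True then show ?thesis using ab unfolding G_def by auto
    next
      case False
      have "x \<in> space M \<Longrightarrow> \<xi> i x \<noteq> 2" for x using pmv[of x i] by auto
      then have "\<xi> i -` {2} \<inter> space M = {}" by auto
      moreover have "A \<inter> B = {}" using ab False by auto
      ultimately show ?thesis unfolding G_def by blast
    qed
  qed
  have indG: "indep_sets G UNIV"
  proof (rule indep_setsI)
    show "G i \<subseteq> events" for i by (rule Gev)
    fix A J assume J: "J \<noteq> {}" "J \<subseteq> UNIV" "finite J" and A: "\<forall>j\<in>J. A j \<in> G j"
    then have "\<forall>j\<in>J. \<exists>a. A j = \<xi> j -` {a} \<inter> space M" unfolding G_def by auto
    then obtain a where a: "\<And>j. j \<in> J \<Longrightarrow> A j = \<xi> j -` {a j} \<inter> space M" by metis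
    have "(\<Inter>j\<in>J. A j) = {\<omega>\<in>space M. \<forall>j\<in>J. \<xi> j \<omega> = a j}" using a J(1) by auto
    then have l: "prob (\<Inter>j\<in>J. A j) = (if \<forall>j\<in>J. a j \<in> {-1,1} then 1 / 2 ^ card J else 0)"
      using fdist_marg[OF fd meas pmv J(3)] by simp
    have s: "prob (A j) = (if a j \<in> {-1,1} then 1/2 else 0)" if "j \<in> J" for j
    proof -
      have "A j = {\<omega>\<in>space M. \<forall>i\<in>{j}. \<xi> i \<omega> = a i}" using a[OF that] by auto
      then show ?thesis using fdist_marg[OF fd meas pmv, of "{j}" a] by simp
    qed
    show "prob (\<Inter>j\<in>J. A j) = (\<Prod>j\<in>J. prob (A j))"
    proof (cases "\<forall>j\<in>J. a j \<in> {-1,1}")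
      case True
      then have "(\<Prod>j\<in>J. prob (A j)) = (\<Prod>j\<in>J. 1/2)" using s by (intro prod.cong) auto
      then show ?thesis using l True by (simp add: power_one_over)
    next
      case False
      then obtain j where j: "j \<in> J" "a j \<notin> {-1,1}" by blast
      then have "(\<Prod>j\<in>J. prob (A j)) = 0" using s J(3) by (intro prod_zero) auto
      then show ?thesis using l False by simp
    qed
  qed
  have "indep_sets (\<lambda>i. sigma_sets (space M) (G i)) UNIV"
    by (rule indep_sets_sigma[OF indG stable])
  then have "indep_sets (\<lambda>i. {\<xi> i -` A \<inter> space M | A. A \<in> sets (count_space UNIV)}) UNIV"
  proof (rule indep_sets_mono_sets)
    fix i
    show "{\<xi> i -` A \<inter> space M | A. A \<in> sets (count_space UNIV)} \<subseteq> sigma_sets (space M) (G i)"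
    proof safe
      fix A :: "int set"
      have e: "\<xi> i -` A \<inter> space M = (if 1 \<in> A then \<xi> i -` {1} \<inter> space M else {}) \<union>
                                      (if -1 \<in> A then \<xi> i -` {-1} \<inter> space M else {})"
      proof (intro equalityI subsetI)
        fix x assume x: "x \<in> \<xi> i -` A \<inter> space M"
        then have "\<xi> i x = 1 \<or> \<xi> i x = -1" using pmv[of x i] by auto
        then show "x \<in> (if 1 \<in> A then \<xi> i -` {1} \<inter> space M else {}) \<union>
                     (if -1 \<in> A then \<xi> i -` {-1} \<inter> space M else {})" using x by auto
      next
        fix x assume "x \<in> (if 1 \<in> A then \<xi> i -` {1} \<inter> space M else {}) \<union>
                     (if -1 \<in> A then \<xi> i -` {-1} \<inter> space M else {})"
        then show "x \<in> \<xi> i -` A \<inter> space M" by (auto split: if_splits)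
      qed
      have 1: "\<xi> i -` {a} \<inter> space M \<in> sigma_sets (space M) (G i)" for a
        unfolding G_def by (rule sigma_sets.Basic) auto
      show "\<xi> i -` A \<inter> space M \<in> sigma_sets (space M) (G i)"
        unfolding e by (intro sigma_sets_Un) (auto intro: 1 sigma_sets.Empty)
    qed
  qed
  then show ?thesis unfolding indep_vars_def2 using meas by auto
qed

lemma srwI:
  assumes "\<And>\<omega>. \<omega> \<in> space M \<Longrightarrow> S \<omega> 0 = 0"
    and pmv: "\<And>\<omega> i. \<omega> \<in> space M \<Longrightarrow> S \<omega> (Suc i) - S \<omega> i \<in> {-1,1}"
    and meas: "\<And>i. (\<lambda>\<omega>. S \<omega> (Suc i) - S \<omega> i) \<in> measurable M (count_space UNIV)"
    and fd: "fdist M (\<lambda>i \<omega>. S \<omega> (Suc i) - S \<omega> i)"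
  shows "srw M S"
  unfolding srw_def
  using assms prob_space_axioms fdist_indep[OF fd meas pmv] fdist_distr[OF fd meas pmv] by auto

lemma srw_pm: "srw M S \<Longrightarrow> \<omega> \<in> space M \<Longrightarrow> pm (S \<omega>)"
  unfolding srw_def pm_def by auto

end

definition pvec :: "nat \<Rightarrow> (nat \<Rightarrow> 'a \<Rightarrow> int) \<Rightarrow> 'a \<Rightarrow> nat \<Rightarrow> int" where
  "pvec n \<xi> \<omega> = (\<lambda>i. if i < n then \<xi> i \<omega> else 0)"

definition Pat :: "nat \<Rightarrow> (nat \<Rightarrow> int) set" where
  "Pat n = {w. (\<forall>i<n. w i \<in> {-1,1}) \<and> (\<forall>i\<ge>n. w i = 0)}"

lemma finite_Pat: "finite (Pat n)"
proof -
  have "Pat n \<subseteq> (\<lambda>f i. if i < n then f i else 0) ` (PiE {..<n} (\<lambda>_. {-1,1::int}))"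
  proof
    fix w assume w: "w \<in> Pat n"
    show "w \<in> (\<lambda>f i. if i < n then f i else 0) ` (PiE {..<n} (\<lambda>_. {-1,1::int}))"
      by (rule image_eqI[where x="restrict w {..<n}"]) (use w in \<open>auto simp: Pat_def\<close>)
  qed
  moreover have "finite ((\<lambda>f i. if i < n then f i else 0) ` (PiE {..<n} (\<lambda>_. {-1,1::int})))"
    by (intro finite_imageI finite_PiE) auto
  ultimately show ?thesis by (rule finite_subset)
qed

context prob_space begin

lemma prob_vec:
  assumes fd: "fdist M \<xi>" and meas: "\<And>i. \<xi> i \<in> measurable M (count_space UNIV)"
    and pmv: "\<And>\<omega> i. \<omega> \<in> space M \<Longrightarrow> \<xi> i \<omega> \<in> {-1,1}"
  shows "prob {\<omega>\<in>space M. pvec n \<xi> \<omega> \<in> W} = card (W \<inter> Pat n) / 2 ^ n"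
proof -
  define E where "E w = {\<omega>\<in>space M. \<forall>i<n. \<xi> i \<omega> = w i}" for w
  have "{\<omega>\<in>space M. pvec n \<xi> \<omega> \<in> W} = (\<Union>w\<in>W \<inter> Pat n. E w)"
  proof (intro equalityI subsetI)
    fix \<omega> assume "\<omega> \<in> {\<omega>\<in>space M. pvec n \<xi> \<omega> \<in> W}"
    moreover have "\<omega> \<in> space M \<Longrightarrow> pvec n \<xi> \<omega> \<in> Pat n" using pmv by (auto simp: pvec_def Pat_def)
    ultimately show "\<omega> \<in> (\<Union>w\<in>W \<inter> Pat n. E w)"
      by (auto simp: E_def pvec_def intro!: bexI[where x="pvec n \<xi> \<omega>"])
  next
    fix \<omega> assume "\<omega> \<in> (\<Union>w\<in>W \<inter> Pat n. E w)"
    then obtain w where w: "w \<in> W" "w \<in> Pat n" "\<omega> \<in> E w" by auto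
    then have "pvec n \<xi> \<omega> = w" by (auto simp: E_def pvec_def Pat_def)
    then show "\<omega> \<in> {\<omega>\<in>space M. pvec n \<xi> \<omega> \<in> W}" using w by (auto simp: E_def)
  qed
  moreover have "prob (\<Union>w\<in>W \<inter> Pat n. E w) = (\<Sum>w\<in>W \<inter> Pat n. prob (E w))"
  proof (rule finite_measure_finite_Union)
    show "finite (W \<inter> Pat n)" using finite_Pat by auto
    show "E ` (W \<inter> Pat n) \<subseteq> events"
    proof safe
      fix w
      have e: "E w = {\<omega>\<in>space M. \<forall>i\<in>{..<n}. \<xi> i \<omega> = w i}" unfolding E_def by auto
      have "{\<omega>\<in>space M. \<forall>i\<in>{..<n}. \<xi> i \<omega> = w i} \<in> events"
      proof (rule sets.sets_Collect_finite_All)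
        fix i
        have "{\<omega>\<in>space M. \<xi> i \<omega> = w i} = \<xi> i -` {w i} \<inter> space M" by auto
        then show "{\<omega>\<in>space M. \<xi> i \<omega> = w i} \<in> events" using measurable_sets[OF meas, of "{w i}" i] by simp
      qed simp
      then show "E w \<in> events" unfolding e .
    qed
    show "disjoint_family_on E (W \<inter> Pat n)"
    unfolding disjoint_family_on_def proof (intro ballI impI)
      fix v w assume vw: "v \<in> W \<inter> Pat n" "w \<in> W \<inter> Pat n" "v \<noteq> w"
      have "\<exists>i<n. v i \<noteq> w i"
      proof (rule ccontr)
        assume "\<not> (\<exists>i<n. v i \<noteq> w i)"
        then have "v i = w i" for i
        proof (cases "i < n")
          case False
          then show ?thesis using vw(1,2) unfolding Pat_def by simp
        qed auto
        then show False using vw(3) by auto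
      qed
      then obtain i where "i < n" "v i \<noteq> w i" by blast
      then show "E v \<inter> E w = {}" unfolding E_def by auto
    qed
  qed
  moreover have "prob (E w) = 1 / 2 ^ n" if "w \<in> Pat n" for w
    using fd[unfolded fdist_def, rule_format, of n w] that unfolding E_def Pat_def by auto
  ultimately show ?thesis by simp
qed

lemma prob_vec_neg:
  assumes fd: "fdist M \<xi>" and meas: "\<And>i. \<xi> i \<in> measurable M (count_space UNIV)"
    and pmv: "\<And>\<omega> i. \<omega> \<in> space M \<Longrightarrow> \<xi> i \<omega> \<in> {-1,1}"
  shows "prob {\<omega>\<in>space M. (\<lambda>i. - pvec n \<xi> \<omega> i) \<in> W} = prob {\<omega>\<in>space M. pvec n \<xi> \<omega> \<in> W}"
proof -
  define ng :: "(nat \<Rightarrow> int) \<Rightarrow> nat \<Rightarrow> int" where "ng w = (\<lambda>i. - w i)" for w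
  have eq: "{\<omega>\<in>space M. (\<lambda>i. - pvec n \<xi> \<omega> i) \<in> W} = {\<omega>\<in>space M. pvec n \<xi> \<omega> \<in> ng -` W}"
    by (auto simp: ng_def)
  have "prob {\<omega>\<in>space M. (\<lambda>i. - pvec n \<xi> \<omega> i) \<in> W} = card (ng -` W \<inter> Pat n) / 2 ^ n"
    unfolding eq by (rule prob_vec[OF fd meas pmv])
  moreover have "card (ng -` W \<inter> Pat n) = card (W \<inter> Pat n)"
  proof -
    have inj: "inj ng" unfolding ng_def inj_def by (auto simp: fun_eq_iff)
    have "ng ` (ng -` W \<inter> Pat n) = W \<inter> Pat n"
    proof (intro equalityI subsetI)
      fix x assume "x \<in> ng ` (ng -` W \<inter> Pat n)"
      then show "x \<in> W \<inter> Pat n" by (auto simp: ng_def Pat_def)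
    next
      fix x assume x: "x \<in> W \<inter> Pat n"
      have "ng (ng x) = x" by (simp add: ng_def)
      moreover have "ng x \<in> ng -` W \<inter> Pat n" using x by (auto simp: ng_def Pat_def)
      ultimately show "x \<in> ng ` (ng -` W \<inter> Pat n)" by (metis image_eqI)
    qed
    then show ?thesis using card_image[of ng "ng -` W \<inter> Pat n"] inj by (metis inj_on_subset subset_UNIV)
  qed
  ultimately show ?thesis using prob_vec[OF fd meas pmv] by simp
qed

end


definition wpath :: "(nat \<Rightarrow> int) \<Rightarrow> nat \<Rightarrow> int" where
  "wpath w i = (\<Sum>k<i. w k)"

lemma S_path:
  assumes "S0 0 = 0" "i \<le> m"
  shows "S0 i = wpath (pvec m (\<lambda>i \<omega>. \<omega> (Suc i) - \<omega> i) S0) i"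
  using assms(2)
proof (induction i)
  case 0 then show ?case using assms(1) by (simp add: wpath_def)
next
  case (Suc i)
  then show ?case by (simp add: wpath_def pvec_def)
qed

lemma part1i:
  assumes "srw M S"
  shows "sigma_sets (space M)
              (gen_sigma (space M) (\<lambda>j \<omega>. cv_T (S \<omega>) j) {..n}
               \<union> gen_sigma (space M) (\<lambda>_ \<omega>. S \<omega> 1) {()})
           = gen_sigma (space M) (\<lambda>j \<omega>. S \<omega> j) {..Suc n}"
    (is "sigma_sets ?\<Omega> (?G1 \<union> ?G2) = ?R")
proof
  have pmS: "\<omega> \<in> space M \<Longrightarrow> pm (S \<omega>)" for \<omega>
    using assms unfolding srw_def pm_def by auto
  have R: "?R = sigma_sets ?\<Omega> (\<Union>i\<in>{..Suc n}. {(\<lambda>\<omega>. S \<omega> i) -` A \<inter> ?\<Omega> | A. True})"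
    unfolding gen_sigma_def ..
  show "sigma_sets ?\<Omega> (?G1 \<union> ?G2) \<subseteq> ?R"
    unfolding R
  proof (rule sigma_sets_mono)
    have "?G1 \<subseteq> ?R" unfolding gen_sigma_def[of _ _ "{..n}"] R
    proof (rule sigma_sets_mono, rule subsetI)
      fix X assume "X \<in> (\<Union>i\<in>{..n}. {(\<lambda>\<omega>. cv_T (S \<omega>) i) -` A \<inter> ?\<Omega> | A. True})"
      then obtain j A where j: "j \<le> n" and X: "X = (\<lambda>\<omega>. cv_T (S \<omega>) j) -` A \<inter> ?\<Omega>" by auto
      show "X \<in> sigma_sets ?\<Omega> (\<Union>i\<in>{..Suc n}. {(\<lambda>\<omega>. S \<omega> i) -` A \<inter> ?\<Omega> | A. True})"
        unfolding R[symmetric] X by (rule gen_sigma_in[where J="{..Suc j}" and g="\<lambda>v. cv_T v j"])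
           (use j in \<open>auto intro!: cvT_local\<close>)
    qed
    moreover have "?G2 \<subseteq> ?R" unfolding gen_sigma_def[of _ _ "{()}"] R
    proof (rule sigma_sets_mono, rule subsetI)
      fix X assume "X \<in> (\<Union>i\<in>{()}. {(\<lambda>\<omega>. S \<omega> 1) -` A \<inter> ?\<Omega> | A. True})"
      then obtain A where X: "X = (\<lambda>\<omega>. S \<omega> 1) -` A \<inter> ?\<Omega>" by auto
      show "X \<in> sigma_sets ?\<Omega> (\<Union>i\<in>{..Suc n}. {(\<lambda>\<omega>. S \<omega> i) -` A \<inter> ?\<Omega> | A. True})"
        unfolding R[symmetric] X by (rule gen_sigma_in[where J="{1}" and g="\<lambda>v. v 1"]) auto
    qed
    ultimately show "?G1 \<union> ?G2 \<subseteq> sigma_sets ?\<Omega> (\<Union>i\<in>{..Suc n}. {(\<lambda>\<omega>. S \<omega> i) -` A \<inter> ?\<Omega> | A. True})"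
      using R by blast
  qed
  define Z where "Z i \<omega> = (case i of 0 \<Rightarrow> S \<omega> 1 | Suc k \<Rightarrow> cv_T (S \<omega>) k)" for i \<omega>
  have ZG: "gen_sigma ?\<Omega> Z {..Suc n} \<subseteq> sigma_sets ?\<Omega> (?G1 \<union> ?G2)"
    unfolding gen_sigma_def[of _ Z]
  proof (rule sigma_sets_mono, rule subsetI)
    fix X assume "X \<in> (\<Union>i\<in>{..Suc n}. {Z i -` A \<inter> ?\<Omega> | A. True})"
    then obtain i A where i: "i \<le> Suc n" and X: "X = Z i -` A \<inter> ?\<Omega>" by auto
    show "X \<in> sigma_sets ?\<Omega> (?G1 \<union> ?G2)"
    proof (cases i)
      case 0
      have "Z i -` A \<inter> ?\<Omega> \<in> ?G2" unfolding gen_sigma_def 0 Z_def by (rule sigma_sets.Basic) auto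
      then show ?thesis using X by auto
    next
      case (Suc k)
      have "Z i -` A \<inter> ?\<Omega> \<in> ?G1" unfolding gen_sigma_def Suc Z_def using i Suc
        by (intro sigma_sets.Basic) auto
      then show ?thesis using X by auto
    qed
  qed
  show "?R \<subseteq> sigma_sets ?\<Omega> (?G1 \<union> ?G2)"
    unfolding R
  proof (rule sigma_sets_mono, rule subsetI)
    fix X assume "X \<in> (\<Union>i\<in>{..Suc n}. {(\<lambda>\<omega>. S \<omega> i) -` A \<inter> ?\<Omega> | A. True})"
    then obtain j A where j: "j \<le> Suc n" and X: "X = (\<lambda>\<omega>. S \<omega> j) -` A \<inter> ?\<Omega>" by auto
    have "(\<lambda>\<omega>. S \<omega> j) -` A \<inter> ?\<Omega> \<in> gen_sigma ?\<Omega> Z {..Suc n}"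
    proof (rule gen_sigma_in[where J="{..Suc n}" and g="\<lambda>v. cvinv (\<lambda>i. v (Suc i)) (v 0) j"])
      fix \<omega> assume \<omega>: "\<omega> \<in> ?\<Omega>"
      have "S \<omega> j = cvinv (cv_T (S \<omega>)) (S \<omega> 1) j" using recover[OF pmS[OF \<omega>]] by simp
      also have "\<dots> = cvinv (\<lambda>i. (\<lambda>i. if i \<in> {..Suc n} then Z i \<omega> else 0) (Suc i))
                         ((\<lambda>i. if i \<in> {..Suc n} then Z i \<omega> else 0) 0) j"
      proof -
        have e0: "(if (0::nat) \<in> {..Suc n} then Z 0 \<omega> else 0) = S \<omega> 1" by (simp add: Z_def)
        show ?thesis unfolding e0
          by (rule inv_local) (use j in \<open>auto simp: Z_def\<close>)
      qed
      finally show "S \<omega> j = cvinv (\<lambda>i. (\<lambda>i. if i \<in> {..Suc n} then Z i \<omega> else 0) (Suc i))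
                         ((\<lambda>i. if i \<in> {..Suc n} then Z i \<omega> else 0) 0) j" .
    qed auto
    then show "X \<in> sigma_sets ?\<Omega> (?G1 \<union> ?G2)" using ZG X by blast
  qed
qed


lemma ev_vec:
  assumes meas: "\<And>i. \<xi> i \<in> measurable M (count_space UNIV)"
  shows "{\<omega>\<in>space M. pvec m \<xi> \<omega> \<in> X} \<in> sets M"
proof -
  have "(\<lambda>\<omega>. pvec m \<xi> \<omega> \<in> X) \<in> measurable M (count_space UNIV)"
    by (rule meas_fd[where J="{..<m}" and Y=\<xi> and g="\<lambda>v. v \<in> X"]) (auto simp: meas pvec_def)
  from measurable_sets[OF this, of "{True}"] show ?thesis
    by (simp add: vimage_def Int_def conj_commute)
qed

lemma wpath_neg: "wpath (\<lambda>i. - u i) = (\<lambda>j. - wpath u j)"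
  by (rule ext) (simp add: wpath_def sum_negf)

lemma part1ii:
  assumes srw: "srw M S"
  shows "prob_space.indep_set M (gen_sigma (space M) (\<lambda>_ \<omega>. S \<omega> 1) {()})
                             (gen_sigma (space M) (\<lambda>j \<omega>. cv_T (S \<omega>) j) UNIV)"
proof -
  interpret prob_space M using srw unfolding srw_def by auto
  let ?\<Omega> = "space M"
  define \<xi> where "\<xi> = (\<lambda>i \<omega>. S \<omega> (Suc i) - S \<omega> i)"
  have meas: "\<xi> i \<in> measurable M (count_space UNIV)" for i
    using srw unfolding srw_def \<xi>_def by auto
  have pmv: "\<omega> \<in> ?\<Omega> \<Longrightarrow> \<xi> i \<omega> \<in> {-1,1}" for \<omega> i
    using srw unfolding srw_def \<xi>_def by auto
  have S0: "\<omega> \<in> ?\<Omega> \<Longrightarrow> S \<omega> 0 = 0" for \<omega> using srw unfolding srw_def by auto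
  have fd: "fdist M \<xi>" unfolding \<xi>_def by (rule fdist_srw[OF srw])
  have S1: "\<omega> \<in> ?\<Omega> \<Longrightarrow> S \<omega> 1 = \<xi> 0 \<omega>" for \<omega> using S0 by (simp add: \<xi>_def)
  define SA where "SA = {(\<lambda>\<omega>. S \<omega> 1) -` A \<inter> ?\<Omega> | A. True}"
  define tv where "tv n \<omega> = (\<lambda>j. if j \<le> n then cv_T (S \<omega>) j else 0)" for n \<omega>
  define B' where "B' = {{\<omega>\<in>?\<Omega>. Q (tv n \<omega>)} | n Q. True}"
  have inB: "{\<omega>\<in>?\<Omega>. Q (tv n \<omega>)} \<in> B'" for n Q unfolding B'_def by blast
  have inA: "(\<lambda>\<omega>. S \<omega> 1) -` A \<inter> ?\<Omega> \<in> SA" for A unfolding SA_def by blast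
  have A_eq: "gen_sigma ?\<Omega> (\<lambda>_ \<omega>. S \<omega> 1) {()} = sigma_sets ?\<Omega> SA"
    unfolding gen_sigma_def SA_def by simp
  have B_sub: "gen_sigma ?\<Omega> (\<lambda>j \<omega>. cv_T (S \<omega>) j) UNIV \<subseteq> sigma_sets ?\<Omega> B'"
    unfolding gen_sigma_def
  proof (rule sigma_sets_mono, rule subsetI)
    fix X assume "X \<in> (\<Union>j\<in>UNIV. {(\<lambda>\<omega>. cv_T (S \<omega>) j) -` A \<inter> ?\<Omega> | A. True})"
    then obtain j A where X: "X = (\<lambda>\<omega>. cv_T (S \<omega>) j) -` A \<inter> ?\<Omega>" by auto
    have "X = {\<omega>\<in>?\<Omega>. (\<lambda>u. u j \<in> A) (tv j \<omega>)}" unfolding X tv_def by auto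
    then have "X \<in> B'" using inB[of "\<lambda>u. u j \<in> A" j] by simp
    then show "X \<in> sigma_sets ?\<Omega> B'" by auto
  qed
  have stA: "Int_stable SA"
  proof (rule Int_stableI)
    fix a b assume "a \<in> SA" "b \<in> SA"
    then obtain A B where "a = (\<lambda>\<omega>. S \<omega> 1) -` A \<inter> ?\<Omega>" "b = (\<lambda>\<omega>. S \<omega> 1) -` B \<inter> ?\<Omega>"
      unfolding SA_def by auto
    then have "a \<inter> b = (\<lambda>\<omega>. S \<omega> 1) -` (A \<inter> B) \<inter> ?\<Omega>" by auto
    then show "a \<inter> b \<in> SA" using inA[of "A \<inter> B"] by (simp only:)
  qed
  have stB: "Int_stable B'"
  proof (rule Int_stableI)
    fix a b assume "a \<in> B'" "b \<in> B'"
    then obtain n Q m R where ab: "a = {\<omega>\<in>?\<Omega>. Q (tv n \<omega>)}" "b = {\<omega>\<in>?\<Omega>. R (tv m \<omega>)}"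
      unfolding B'_def by auto
    define tr :: "nat \<Rightarrow> (nat \<Rightarrow> int) \<Rightarrow> nat \<Rightarrow> int" where "tr k u = (\<lambda>j. if j \<le> k then u j else (0::int))" for k u
    have "tr n (tv (max n m) \<omega>) = tv n \<omega>" for \<omega>
      unfolding tr_def tv_def by (rule ext) auto
    moreover have "tr m (tv (max n m) \<omega>) = tv m \<omega>" for \<omega>
      unfolding tr_def tv_def by (rule ext) auto
    ultimately have "a \<inter> b = {\<omega>\<in>?\<Omega>. (\<lambda>u. Q (tr n u) \<and> R (tr m u)) (tv (max n m) \<omega>)}"
      unfolding ab by auto
    then show "a \<inter> b \<in> B'" using inB[of "\<lambda>u. Q (tr n u) \<and> R (tr m u)" "max n m"] by simp
  qed
  have core: "prob (a \<inter> b) = prob a * prob b" if a: "a \<in> SA" and b: "b \<in> B'" for a b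
  proof -
    obtain A where aA: "a = (\<lambda>\<omega>. S \<omega> 1) -` A \<inter> ?\<Omega>" using a unfolding SA_def by auto
    obtain n Q where bQ: "b = {\<omega>\<in>?\<Omega>. Q (tv n \<omega>)}" using b unfolding B'_def by auto
    define F where "F u = (\<lambda>j. if j \<le> n then cv_T (wpath u) j else 0)" for u
    define V where "V = pvec (Suc n) \<xi>"
    have tvF: "tv n \<omega> = F (V \<omega>)" if "\<omega> \<in> ?\<Omega>" for \<omega>
    proof -
      have SP: "S \<omega> i = wpath (V \<omega>) i" if "i \<le> Suc n" for i
        using S_path[of "S \<omega>" i "Suc n", OF S0[OF \<open>\<omega> \<in> ?\<Omega>\<close>] that]
        by (simp add: V_def pvec_def \<xi>_def)
      have "cv_T (S \<omega>) j = cv_T (wpath (V \<omega>)) j" if "j \<le> n" for j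
        using that SP by (intro cvT_local) auto
      then show ?thesis unfolding tv_def F_def by auto
    qed
    have Fneg: "F (\<lambda>i. - u i) = F u" for u unfolding F_def wpath_neg cvT_neg ..
    define W where "W = {u. Q (F u)}"
    define W1 where "W1 = W \<inter> {u. u 0 = 1}"
    define W2 where "W2 = W \<inter> {u. u 0 = -1}"
    have V0: "\<omega> \<in> ?\<Omega> \<Longrightarrow> V \<omega> 0 = S \<omega> 1" for \<omega> using S1[of \<omega>] by (simp add: V_def pvec_def)
    have Sv: "\<omega> \<in> ?\<Omega> \<Longrightarrow> S \<omega> 1 = 1 \<or> S \<omega> 1 = -1" for \<omega> using pmv[of \<omega> 0] S1 by auto
    have ev: "{\<omega>\<in>?\<Omega>. V \<omega> \<in> X} \<in> events" for X unfolding V_def by (rule ev_vec[OF meas])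
    have Vv: "\<omega> \<in> ?\<Omega> \<Longrightarrow> V \<omega> 0 = 1 \<or> V \<omega> 0 = -1" for \<omega> using V0[of \<omega>] Sv[of \<omega>] by simp
    have b_eq: "b = {\<omega>\<in>?\<Omega>. V \<omega> \<in> W1} \<union> {\<omega>\<in>?\<Omega>. V \<omega> \<in> W2}"
      unfolding bQ W1_def W2_def W_def using tvF by (auto dest: Vv)
    have p12: "prob {\<omega>\<in>?\<Omega>. V \<omega> \<in> W2} = prob {\<omega>\<in>?\<Omega>. V \<omega> \<in> W1}"
    proof -
      have "{\<omega>\<in>?\<Omega>. V \<omega> \<in> W2} = {\<omega>\<in>?\<Omega>. (\<lambda>i. - V \<omega> i) \<in> W1}"
        unfolding W1_def W2_def W_def using Fneg by auto
      then show ?thesis unfolding V_def using prob_vec_neg[OF fd meas pmv] by simp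
    qed
    have pb: "prob b = 2 * prob {\<omega>\<in>?\<Omega>. V \<omega> \<in> W1}"
      unfolding b_eq
    proof (subst finite_measure_Union)
      show "{\<omega>\<in>?\<Omega>. V \<omega> \<in> W1} \<in> events" "{\<omega>\<in>?\<Omega>. V \<omega> \<in> W2} \<in> events" by (rule ev)+
      show "{\<omega>\<in>?\<Omega>. V \<omega> \<in> W1} \<inter> {\<omega>\<in>?\<Omega>. V \<omega> \<in> W2} = {}" unfolding W1_def W2_def by auto
    qed (simp add: p12)
    have half: "prob {\<omega>\<in>?\<Omega>. S \<omega> 1 = c} = 1/2" if "c \<in> {-1,1}" for c
    proof -
      have "{\<omega>\<in>?\<Omega>. S \<omega> 1 = c} = {\<omega>\<in>?\<Omega>. \<forall>j\<in>{0}. \<xi> j \<omega> = (\<lambda>_. c) j}" using S1 by auto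
      then show ?thesis using fdist_marg[OF fd meas pmv, of "{0}" "\<lambda>_. c"] that by simp
    qed
    have c1: "a \<inter> b = {\<omega>\<in>?\<Omega>. V \<omega> \<in> W1}" "a = {\<omega>\<in>?\<Omega>. S \<omega> 1 = 1}" if "1 \<in> A" "-1 \<notin> A"
      using that unfolding aA b_eq W1_def W2_def using V0 by (auto dest: Sv)
    have c2: "a \<inter> b = {\<omega>\<in>?\<Omega>. V \<omega> \<in> W2}" "a = {\<omega>\<in>?\<Omega>. S \<omega> 1 = -1}" if "1 \<notin> A" "-1 \<in> A"
      using that unfolding aA b_eq W1_def W2_def using V0 by (auto dest: Sv)
    have c3: "a = ?\<Omega>" if "1 \<in> A" "-1 \<in> A" using that unfolding aA by (auto dest: Sv)
    have c4: "a = {}" if "1 \<notin> A" "-1 \<notin> A" using that unfolding aA by (auto dest: Sv)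
    have bsub: "b \<subseteq> ?\<Omega>" unfolding bQ by auto
    show ?thesis
    proof (cases "1 \<in> A"; cases "-1 \<in> A")
      assume "1 \<in> A" "-1 \<in> A"
      then show ?thesis using c3 bsub prob_space by (simp add: Int_absorb1)
    next
      assume "1 \<in> A" "-1 \<notin> A"
      then show ?thesis using c1 half[of 1] pb by simp
    next
      assume "1 \<notin> A" "-1 \<in> A"
      then show ?thesis using c2 half[of "-1"] pb p12 by simp
    next
      assume "1 \<notin> A" "-1 \<notin> A"
      then show ?thesis using c4 by simp
    qed
  qed
  have evA: "SA \<subseteq> events"
  proof
    fix a assume "a \<in> SA"
    then obtain A where aA: "a = (\<lambda>\<omega>. S \<omega> 1) -` A \<inter> ?\<Omega>" unfolding SA_def by auto
    have "a = \<xi> 0 -` A \<inter> ?\<Omega>" unfolding aA using S1 by auto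
    then show "a \<in> events" using measurable_sets[OF meas] by simp
  qed
  have evB: "B' \<subseteq> events"
  proof
    fix b assume "b \<in> B'"
    then obtain n Q where bQ: "b = {\<omega>\<in>?\<Omega>. Q (tv n \<omega>)}" unfolding B'_def by auto
    have "(\<lambda>\<omega>. Q (tv n \<omega>)) \<in> measurable M (count_space UNIV)"
    proof (rule meas_fd[where J="{..<Suc n}" and Y=\<xi> and g="\<lambda>u. Q (\<lambda>j. if j \<le> n then cv_T (wpath u) j else 0)"])
      fix \<omega> assume \<omega>: "\<omega> \<in> ?\<Omega>"
      have vv: "pvec (Suc n) (\<lambda>i s. s (Suc i) - s i) (S \<omega>) = (\<lambda>i. if i \<in> {..<Suc n} then \<xi> i \<omega> else 0)"
        unfolding pvec_def \<xi>_def by auto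
      have SP: "S \<omega> i = wpath (\<lambda>i. if i \<in> {..<Suc n} then \<xi> i \<omega> else 0) i" if "i \<le> Suc n" for i
        using S_path[of "S \<omega>" i "Suc n", OF S0[OF \<omega>] that] unfolding vv .
      have cj: "cv_T (S \<omega>) j = cv_T (wpath (\<lambda>i. if i \<in> {..<Suc n} then \<xi> i \<omega> else 0)) j" if "j \<le> n" for j
        using that SP by (intro cvT_local) auto
      have "tv n \<omega> = (\<lambda>j. if j \<le> n then cv_T (wpath (\<lambda>i. if i \<in> {..<Suc n} then \<xi> i \<omega> else 0)) j else 0)"
        unfolding tv_def by (rule ext) (simp add: cj)
      then show "Q (tv n \<omega>) = Q (\<lambda>j. if j \<le> n then cv_T (wpath (\<lambda>i. if i \<in> {..<Suc n} then \<xi> i \<omega> else 0)) j else 0)"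
        by simp
    qed (auto simp: meas)
    from measurable_sets[OF this, of "{True}"] show "b \<in> events"
      unfolding bQ by (simp add: vimage_def Int_def conj_commute)
  qed
  have "indep_set SA B'" by (rule indep_setI[OF evA evB core])
  then have "indep_set (sigma_sets ?\<Omega> SA) (sigma_sets ?\<Omega> B')"
    by (rule indep_set_sigma_sets[OF _ stA stB])
  then have "indep_set (sigma_sets ?\<Omega> SA) (gen_sigma ?\<Omega> (\<lambda>j \<omega>. cv_T (S \<omega>) j) UNIV)"
    unfolding indep_set_def
    by (rule indep_sets_mono_sets) (use B_sub in \<open>auto split: bool.split\<close>)
  then show ?thesis unfolding A_eq .
qed


lemma srw_Smeas:
  assumes "srw M S" shows "(\<lambda>\<omega>. S \<omega> i) \<in> measurable M (count_space UNIV)"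
proof (rule meas_fd[where J="{..<i}" and Y="\<lambda>k \<omega>. S \<omega> (Suc k) - S \<omega> k" and g="\<lambda>v. wpath v i"])
  fix \<omega> assume \<omega>: "\<omega> \<in> space M"
  have "S \<omega> 0 = 0" using assms \<omega> unfolding srw_def by auto
  from S_path[of "S \<omega>" i i, OF this]
  show "S \<omega> i = wpath (\<lambda>k. if k \<in> {..<i} then S \<omega> (Suc k) - S \<omega> k else 0) i"
    by (simp add: pvec_def)
qed (use assms in \<open>auto simp: srw_def\<close>)

lemma srw_neg:
  assumes srw: "srw M S" shows "srw M (\<lambda>\<omega> n. - S \<omega> n)"
proof -
  interpret prob_space M using srw unfolding srw_def by auto
  define \<xi> where "\<xi> = (\<lambda>i \<omega>. S \<omega> (Suc i) - S \<omega> i)"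
  have fd: "fdist M \<xi>" unfolding \<xi>_def by (rule fdist_srw[OF srw])
  show ?thesis
  proof (rule srwI)
    show "\<omega> \<in> space M \<Longrightarrow> - S \<omega> 0 = 0" for \<omega> using srw unfolding srw_def by auto
    show "\<omega> \<in> space M \<Longrightarrow> - S \<omega> (Suc i) - - S \<omega> i \<in> {-1,1}" for \<omega> i
      using srw unfolding srw_def by (auto simp: algebra_simps) (metis insert_iff minus_diff_eq singletonD)+
    show "(\<lambda>\<omega>. - S \<omega> (Suc i) - - S \<omega> i) \<in> measurable M (count_space UNIV)" for i
      by (rule meas_fd[where J="{i}" and Y=\<xi> and g="\<lambda>v. - v i"]) (use srw in \<open>auto simp: srw_def \<xi>_def\<close>)
    show "fdist M (\<lambda>i \<omega>. - S \<omega> (Suc i) - - S \<omega> i)"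
      unfolding fdist_def
    proof (intro allI impI)
      fix n and w :: "nat \<Rightarrow> int" assume w: "\<forall>i<n. w i \<in> {-1,1}"
      have "{\<omega>\<in>space M. \<forall>i<n. - S \<omega> (Suc i) - - S \<omega> i = w i} = {\<omega>\<in>space M. \<forall>i<n. \<xi> i \<omega> = - w i}"
        unfolding \<xi>_def by auto
      moreover have "\<forall>i<n. - w i \<in> {-1,1}" using w by auto
      ultimately show "prob {\<omega>\<in>space M. \<forall>i<n. - S \<omega> (Suc i) - - S \<omega> i = w i} = 1 / 2 ^ n"
        using fd[unfolded fdist_def, rule_format, of n "\<lambda>i. - w i"] by simp
    qed
  qed
qed

lemma gen_sigma_cong:
  assumes "\<And>i \<omega>. i \<in> I \<Longrightarrow> \<omega> \<in> \<Omega> \<Longrightarrow> X i \<omega> = Y i \<omega>"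
  shows "gen_sigma \<Omega> X I = gen_sigma \<Omega> Y I"
proof -
  have "X i -` A \<inter> \<Omega> = Y i -` A \<inter> \<Omega>" if "i \<in> I" for i A using assms[OF that] by auto
  then have "(\<Union>i\<in>I. {X i -` A \<inter> \<Omega> | A. True}) = (\<Union>i\<in>I. {Y i -` A \<inter> \<Omega> | A. True})"
    by (intro SUP_cong refl) auto
  then show ?thesis unfolding gen_sigma_def by simp
qed

lemma unique_pm:
  assumes "pm s" "pm s'" "cv_T s' = cv_T s"
  shows "s' = s \<or> s' = (\<lambda>n. - s n)"
proof -
  have s1: "s 1 \<in> {-1,1}" "s' 1 \<in> {-1,1}" using pm_s1 assms by auto
  have z: "s 0 = 0" "s' 0 = 0" using assms unfolding pm_def by auto
  show ?thesis
  proof (cases "s' 1 = s 1")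
    case True
    have "s' 1 \<noteq> 0" using s1 by auto
    then have "s' = s" using inj_global[OF z(2) z(1) True _ assms(3)] by blast
    then show ?thesis by simp
  next
    case False
    then have "(\<lambda>n. - s' n) 1 = s 1" using s1 by auto
    moreover have "cv_T (\<lambda>n. - s' n) = cv_T s" using assms(3) cvT_neg by simp
    moreover have "(\<lambda>n. - s' n) 0 = 0" using z by simp
    moreover have "(\<lambda>n. - s' n) 1 \<noteq> 0" using s1 by auto
    ultimately have "(\<lambda>n. - s' n) = s" using inj_global[of "\<lambda>n. - s' n" s] z by blast
    then have "s' = (\<lambda>n. - s n)" by (metis (no_types) add.inverse_inverse)
    then show ?thesis by simp
  qed
qed

lemma wpath_Suc: "wpath w (Suc i) = wpath w i + w i"
  by (simp add: wpath_def)

lemma hsteps: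
  assumes "\<forall>i<Suc m. w i \<in> {-1,1}" "k < m"
  shows "cv_T (wpath w) (Suc k) - cv_T (wpath w) k \<in> {-1,1}"
proof -
  have "cv_T (wpath w) (Suc k) - cv_T (wpath w) k = xb (wpath w) (Suc k)" by (simp add: cvT_Suc)
  also have "\<dots> = (-1) ^ (cnt (wpath w) (Suc k) + 1) * w 0 * w (Suc k)"
    unfolding xb_def step_def by (simp add: wpath_def)
  finally have eq: "cv_T (wpath w) (Suc k) - cv_T (wpath w) k = (-1) ^ (cnt (wpath w) (Suc k) + 1) * w 0 * w (Suc k)" .
  have "w 0 \<in> {-1,1}" "w (Suc k) \<in> {-1,1}" using assms by auto
  then have "(-1) ^ (cnt (wpath w) (Suc k) + 1) * w 0 * w (Suc k) \<in> {-1,1}"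
    using pm1_mult[OF pm1_mult[OF sgn_pow]] by blast
  then show ?thesis unfolding eq .
qed

lemma fd_event:
  assumes b: "pm b" and e: "e \<in> {-1,1}" and w: "\<forall>i<Suc m. w i \<in> {-1,1}"
  shows "(\<forall>i<Suc m. cvinv b e (Suc i) - cvinv b e i = w i) \<longleftrightarrow>
         (e = w 0 \<and> (\<forall>k<m. b (Suc k) - b k = cv_T (wpath w) (Suc k) - cv_T (wpath w) k))"
proof -
  let ?s = "cvinv b e" and ?p = "wpath w"
  have b0: "b 0 = 0" using b by (simp add: pm_def)
  have Ts: "cv_T ?s = b" by (rule ext, rule cvT_inv[where b=b and e=e, OF e b0])
  show ?thesis
  proof
    assume H: "\<forall>i<Suc m. ?s (Suc i) - ?s i = w i"
    have sp: "?s i = ?p i" if "i \<le> Suc m" for i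
      using that
    proof (induction i)
      case 0 then show ?case by (simp add: wpath_def)
    next
      case (Suc i)
      then have "?s (Suc i) = ?s i + w i" using H by (metis Suc_le_lessD add.commute diff_add_cancel)
      then show ?case using Suc by (simp add: wpath_Suc)
    qed
    have "e = w 0" using sp[of 1] by (simp add: wpath_def)
    moreover have bT: "b j = cv_T ?p j" if "j \<le> m" for j
    proof -
      have "cv_T ?s j = cv_T ?p j" by (rule cvT_local) (use sp that in auto)
      then show ?thesis using Ts by simp
    qed
    ultimately show "e = w 0 \<and> (\<forall>k<m. b (Suc k) - b k = cv_T ?p (Suc k) - cv_T ?p k)"
      by auto
  next
    assume H: "e = w 0 \<and> (\<forall>k<m. b (Suc k) - b k = cv_T ?p (Suc k) - cv_T ?p k)"
    have bT: "b j = cv_T ?p j" if "j \<le> m" for j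
      using that
    proof (induction j)
      case 0 then show ?case using b0 by simp
    next
      case (Suc j)
      have j: "j < m" using Suc.prems by simp
      have IH: "b j = cv_T ?p j" using Suc.IH j by simp
      have "b (Suc j) - b j = cv_T ?p (Suc j) - cv_T ?p j" using H j by blast
      then show ?case using IH by simp
    qed
    have "\<forall>j\<le>Suc m. ?s j = ?p j"
    proof (rule inj_local)
      show "?s 0 = 0" "?p 0 = 0" by (auto simp: wpath_def)
      show "?s 1 = ?p 1" using H by (simp add: wpath_def)
      show "?s 1 \<noteq> 0" using e by auto
      show "\<forall>j\<le>m. cv_T ?s j = cv_T ?p j" using bT Ts by simp
    qed
    then show "\<forall>i<Suc m. ?s (Suc i) - ?s i = w i"
      by (auto simp: wpath_Suc)
  qed
qed


lemma part2:
  fixes M :: "'a measure" and Sbar :: "'a \<Rightarrow> nat \<Rightarrow> int"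
  assumes srw: "srw M Sbar"
  shows "\<exists>(M'::('a \<times> bool) measure) \<pi> S.
          \<pi> \<in> measurable M' M \<and> distr M' M \<pi> = M \<and>
          srw M' S \<and>
          (\<forall>\<omega>\<in>space M'. cv_T (S \<omega>) = Sbar (\<pi> \<omega>)) \<and>
          (\<forall>\<omega>\<in>space M'. \<forall>n. \<bar>run_max_gap (Sbar (\<pi> \<omega>)) n - \<bar>S \<omega> n\<bar>\<bar> \<le> 2) \<and>
          srw M' (\<lambda>\<omega> n. - S \<omega> n) \<and>
          (\<forall>\<omega>\<in>space M'. cv_T (\<lambda>n. - S \<omega> n) = Sbar (\<pi> \<omega>)) \<and>
          (\<forall>S'. srw M' S' \<and> (AE \<omega> in M'. cv_T (S' \<omega>) = Sbar (\<pi> \<omega>)) \<longrightarrow>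
               (AE \<omega> in M'. S' \<omega> = S \<omega> \<or> S' \<omega> = (\<lambda>n. - S \<omega> n))) \<and>
          (\<exists>F. \<forall>\<omega>\<in>space M'. S \<omega> = F (Sbar (\<pi> \<omega>)) (S \<omega> 1)) \<and>
          prob_space.indep_set M' (gen_sigma (space M') (\<lambda>_ \<omega>. S \<omega> 1) {()})
              (gen_sigma (space M') (\<lambda>j \<omega>. Sbar (\<pi> \<omega>) j) UNIV)"
proof -
  interpret M: prob_space M using srw unfolding srw_def by auto
  define C where "C = measure_pmf (pmf_of_set (UNIV::bool set))"
  interpret C: prob_space C unfolding C_def by (rule prob_space_measure_pmf)
  interpret P: pair_prob_space M C ..
  define M' where "M' = M \<Otimes>\<^sub>M C"
  have pM': "prob_space M'" unfolding M'_def by (rule P.prob_space_axioms)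
  define ee where "ee c = (if c then 1 else -1 :: int)" for c
  define S where "S \<omega> = cvinv (Sbar (fst \<omega>)) (ee (snd \<omega>))" for \<omega>
  have spM': "space M' = space M \<times> UNIV" unfolding M'_def C_def by (simp add: space_pair_measure)
  have ee: "ee c \<in> {-1,1}" for c by (simp add: ee_def)
  have pmSb: "x \<in> space M \<Longrightarrow> pm (Sbar x)" for x using srw unfolding srw_def pm_def by auto
  have pmS: "\<omega> \<in> space M' \<Longrightarrow> pm (S \<omega>)" for \<omega>
    unfolding S_def using pm_inv[OF ee pmSb] spM' by auto
  have TS: "cv_T (S \<omega>) = Sbar (fst \<omega>)" if "\<omega> \<in> space M'" for \<omega>
  proof -
    have "Sbar (fst \<omega>) 0 = 0" using pmSb[of "fst \<omega>"] that spM' by (auto simp: pm_def)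
    then show ?thesis unfolding S_def by (intro ext cvT_inv[OF ee])
  qed
  define Y where "Y k \<omega> = (case k of 0 \<Rightarrow> ee (snd \<omega>) | Suc j \<Rightarrow> Sbar (fst \<omega>) j)" for k \<omega>
  have Ymeas: "Y k \<in> measurable M' (count_space UNIV)" for k
  proof (cases k)
    case 0
    have "(\<lambda>\<omega>. ee (snd \<omega>)) \<in> measurable M' (count_space UNIV)"
      unfolding M'_def by (rule measurable_compose[OF measurable_snd]) (simp add: C_def)
    moreover have "Y k = (\<lambda>\<omega>. ee (snd \<omega>))" using 0 by (intro ext) (simp add: Y_def)
    ultimately show ?thesis by simp
  next
    case (Suc j)
    have "(\<lambda>\<omega>. Sbar (fst \<omega>) j) \<in> measurable M' (count_space UNIV)"
      unfolding M'_def by (rule measurable_compose[OF measurable_fst srw_Smeas[OF srw]])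
    moreover have "Y k = (\<lambda>\<omega>. Sbar (fst \<omega>) j)" using Suc by (intro ext) (simp add: Y_def)
    ultimately show ?thesis by simp
  qed
  have Sval: "S \<omega> j = cvinv (\<lambda>k. (\<lambda>i. if i \<in> {..Suc m} then Y i \<omega> else 0) (Suc k))
                               ((\<lambda>i. if i \<in> {..Suc m} then Y i \<omega> else 0) 0) j" if "j \<le> Suc m" for \<omega> j m
  proof -
    have e0: "(if (0::nat) \<in> {..Suc m} then Y 0 \<omega> else 0) = ee (snd \<omega>)" by (simp add: Y_def)
    show ?thesis unfolding e0 S_def by (rule inv_local) (use that in \<open>auto simp: Y_def\<close>)
  qed
  have stepmeas: "(\<lambda>\<omega>. S \<omega> (Suc i) - S \<omega> i) \<in> measurable M' (count_space UNIV)" for i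
  proof (rule meas_fd[where J="{..Suc i}" and Y=Y and
        g="\<lambda>v. cvinv (\<lambda>k. v (Suc k)) (v 0) (Suc i) - cvinv (\<lambda>k. v (Suc k)) (v 0) i"])
    fix \<omega>
    show "S \<omega> (Suc i) - S \<omega> i = cvinv (\<lambda>k. (\<lambda>i'. if i' \<in> {..Suc i} then Y i' \<omega> else 0) (Suc k))
          ((\<lambda>i'. if i' \<in> {..Suc i} then Y i' \<omega> else 0) 0) (Suc i) -
        cvinv (\<lambda>k. (\<lambda>i'. if i' \<in> {..Suc i} then Y i' \<omega> else 0) (Suc k))
          ((\<lambda>i'. if i' \<in> {..Suc i} then Y i' \<omega> else 0) 0) i"
      using Sval[of "Suc i" i \<omega>] Sval[of i i \<omega>] by simp
  qed (auto simp: Ymeas)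
  have fdS: "fdist M' (\<lambda>i \<omega>. S \<omega> (Suc i) - S \<omega> i)"
    unfolding fdist_def
  proof (intro allI impI)
    fix n and w :: "nat \<Rightarrow> int" assume w: "\<forall>i<n. w i \<in> {-1,1}"
    show "measure M' {\<omega>\<in>space M'. \<forall>i<n. S \<omega> (Suc i) - S \<omega> i = w i} = 1 / 2 ^ n"
    proof (cases n)
      case 0
      then show ?thesis using prob_space.prob_space[OF pM'] by simp
    next
      case (Suc m)
      define h where "h k = cv_T (wpath w) (Suc k) - cv_T (wpath w) k" for k
      define A where "A = {x\<in>space M. \<forall>k<m. Sbar x (Suc k) - Sbar x k = h k}"
      define B where "B = {c. ee c = w 0}"
      have w': "\<forall>i<Suc m. w i \<in> {-1,1}" using w Suc by simp
      have key: "(\<forall>i<n. S (x, c) (Suc i) - S (x, c) i = w i) \<longleftrightarrow> (c \<in> B \<and> x \<in> A)"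
        if "x \<in> space M" for x c
      proof -
        have "(\<forall>i<n. S (x, c) (Suc i) - S (x, c) i = w i) \<longleftrightarrow>
              (\<forall>i<Suc m. cvinv (Sbar x) (ee c) (Suc i) - cvinv (Sbar x) (ee c) i = w i)"
          by (simp add: S_def Suc)
        also have "\<dots> \<longleftrightarrow> (ee c = w 0 \<and> (\<forall>k<m. Sbar x (Suc k) - Sbar x k = h k))"
          unfolding h_def by (rule fd_event[OF pmSb[OF that] ee w'])
        also have "\<dots> \<longleftrightarrow> (c \<in> B \<and> x \<in> A)" using that by (simp add: A_def B_def)
        finally show ?thesis .
      qed
      have ev: "{\<omega>\<in>space M'. \<forall>i<n. S \<omega> (Suc i) - S \<omega> i = w i} = A \<times> B"
      proof (intro equalityI subsetI)
        fix \<omega> assume "\<omega> \<in> {\<omega>\<in>space M'. \<forall>i<n. S \<omega> (Suc i) - S \<omega> i = w i}"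
        then show "\<omega> \<in> A \<times> B" using key[of "fst \<omega>" "snd \<omega>"] spM' by (cases \<omega>) auto
      next
        fix \<omega> assume "\<omega> \<in> A \<times> B"
        then show "\<omega> \<in> {\<omega>\<in>space M'. \<forall>i<n. S \<omega> (Suc i) - S \<omega> i = w i}"
          using key[of "fst \<omega>" "snd \<omega>"] spM' A_def by (cases \<omega>) auto
      qed
      have hpm: "\<forall>k<m. h k \<in> {-1,1}" unfolding h_def using hsteps[OF w'] by auto
      have fdM: "fdist M (\<lambda>i \<omega>. Sbar \<omega> (Suc i) - Sbar \<omega> i)" by (rule M.fdist_srw[OF srw])
      have pA: "measure M A = 1 / 2 ^ m"
        unfolding A_def using fdM[unfolded fdist_def, rule_format, of m h] hpm by simp
      have pB: "measure C B = 1 / 2"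
      proof -
        have "w 0 = 1 \<or> w 0 = -1" using w' by auto
        then have "B = {True} \<or> B = {False}" unfolding B_def ee_def by auto
        then have "card B = 1" by auto
        then show ?thesis unfolding C_def by (simp add: measure_pmf_of_set)
      qed
      have Asets: "A \<in> sets M"
      proof -
        have "A = {x\<in>space M. pvec m (\<lambda>i \<omega>. Sbar \<omega> (Suc i) - Sbar \<omega> i) x \<in> {u. \<forall>k<m. u k = h k}}"
          unfolding A_def pvec_def by auto
        also have "\<dots> \<in> sets M" by (rule ev_vec) (use srw in \<open>auto simp: srw_def\<close>)
        finally show ?thesis .
      qed
      have Bsets: "B \<in> sets C" unfolding C_def by simp
      have "emeasure M' (A \<times> B) = emeasure M A * emeasure C B"
        unfolding M'_def by (rule C.emeasure_pair_measure_Times[OF Asets Bsets])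
      then have "measure M' (A \<times> B) = measure M A * measure C B"
        by (simp add: measure_def enn2real_mult)
      moreover have "measure M' {\<omega>\<in>space M'. \<forall>i<n. S \<omega> (Suc i) - S \<omega> i = w i} = measure M' (A \<times> B)"
        by (simp only: ev)
      ultimately show ?thesis using pA pB Suc by (simp add: mult.commute)
    qed
  qed
  have srwS: "srw M' S"
  proof (rule prob_space.srwI[OF pM'])
    show "\<omega> \<in> space M' \<Longrightarrow> S \<omega> 0 = 0" for \<omega> by (simp add: S_def)
    show "\<omega> \<in> space M' \<Longrightarrow> S \<omega> (Suc i) - S \<omega> i \<in> {-1,1}" for \<omega> i
      using pmS unfolding pm_def by auto
  qed (rule stepmeas, rule fdS)
  show ?thesis
  proof (rule exI[of _ M'], rule exI[of _ fst], rule exI[of _ S], intro conjI)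
    show "fst \<in> measurable M' M" unfolding M'_def by (rule measurable_fst)
    show "distr M' M fst = M" unfolding M'_def by (rule C.distr_pair_fst)
    show "srw M' S" by (rule srwS)
    show "\<forall>\<omega>\<in>space M'. cv_T (S \<omega>) = Sbar (fst \<omega>)" using TS by auto
    show "\<forall>\<omega>\<in>space M'. \<forall>n. \<bar>run_max_gap (Sbar (fst \<omega>)) n - \<bar>S \<omega> n\<bar>\<bar> \<le> 2"
      using gap_bound[OF pmS] TS by metis
    show "srw M' (\<lambda>\<omega> n. - S \<omega> n)" by (rule srw_neg[OF srwS])
    show "\<forall>\<omega>\<in>space M'. cv_T (\<lambda>n. - S \<omega> n) = Sbar (fst \<omega>)" using TS cvT_neg by auto
    show "\<forall>S'. srw M' S' \<and> (AE \<omega> in M'. cv_T (S' \<omega>) = Sbar (fst \<omega>)) \<longrightarrow>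
               (AE \<omega> in M'. S' \<omega> = S \<omega> \<or> S' \<omega> = (\<lambda>n. - S \<omega> n))"
    proof (intro allI impI, elim conjE)
      fix S' assume srw': "srw M' S'" and ae: "AE \<omega> in M'. cv_T (S' \<omega>) = Sbar (fst \<omega>)"
      show "AE \<omega> in M'. S' \<omega> = S \<omega> \<or> S' \<omega> = (\<lambda>n. - S \<omega> n)"
        using ae
      proof (rule AE_mp)
        show "AE \<omega> in M'. cv_T (S' \<omega>) = Sbar (fst \<omega>) \<longrightarrow> S' \<omega> = S \<omega> \<or> S' \<omega> = (\<lambda>n. - S \<omega> n)"
        proof (rule AE_I2, rule impI)
          fix \<omega> assume \<omega>: "\<omega> \<in> space M'" and c: "cv_T (S' \<omega>) = Sbar (fst \<omega>)"
          have "pm (S' \<omega>)" using srw' \<omega> unfolding srw_def pm_def by auto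
          then show "S' \<omega> = S \<omega> \<or> S' \<omega> = (\<lambda>n. - S \<omega> n)"
            using unique_pm[OF pmS[OF \<omega>]] c TS[OF \<omega>] by simp
        qed
      qed
    qed
    show "\<exists>F. \<forall>\<omega>\<in>space M'. S \<omega> = F (Sbar (fst \<omega>)) (S \<omega> 1)"
      by (rule exI[of _ cvinv]) (simp add: S_def)
    have "prob_space.indep_set M' (gen_sigma (space M') (\<lambda>_ \<omega>. S \<omega> 1) {()})
              (gen_sigma (space M') (\<lambda>j \<omega>. cv_T (S \<omega>) j) UNIV)"
      by (rule part1ii[OF srwS])
    moreover have "gen_sigma (space M') (\<lambda>j \<omega>. cv_T (S \<omega>) j) UNIV = gen_sigma (space M') (\<lambda>j \<omega>. Sbar (fst \<omega>) j) UNIV"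
      by (rule gen_sigma_cong) (simp add: TS)
    ultimately show "prob_space.indep_set M' (gen_sigma (space M') (\<lambda>_ \<omega>. S \<omega> 1) {()})
              (gen_sigma (space M') (\<lambda>j \<omega>. Sbar (fst \<omega>) j) UNIV)" by simp
  qed
qed


theorem corollary2:
  shows
  "(\<forall>(M::'a measure) S. srw M S \<longrightarrow>
      (\<forall>n. sigma_sets (space M)
              (gen_sigma (space M) (\<lambda>j \<omega>. cv_T (S \<omega>) j) {..n}
               \<union> gen_sigma (space M) (\<lambda>_ \<omega>. S \<omega> 1) {()})
           = gen_sigma (space M) (\<lambda>j \<omega>. S \<omega> j) {..Suc n})
    \<and> prob_space.indep_set M (gen_sigma (space M) (\<lambda>_ \<omega>. S \<omega> 1) {()})
                             (gen_sigma (space M) (\<lambda>j \<omega>. cv_T (S \<omega>) j) UNIV))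
   \<and>
   (\<forall>(M::'a measure) Sbar. srw M Sbar \<longrightarrow>
      (\<exists>(M'::('a \<times> bool) measure) \<pi> S.
          \<pi> \<in> measurable M' M \<and> distr M' M \<pi> = M \<and>
          srw M' S \<and>
          (\<forall>\<omega>\<in>space M'. cv_T (S \<omega>) = Sbar (\<pi> \<omega>)) \<and>
          (\<forall>\<omega>\<in>space M'. \<forall>n. \<bar>run_max_gap (Sbar (\<pi> \<omega>)) n - \<bar>S \<omega> n\<bar>\<bar> \<le> 2) \<and>
          srw M' (\<lambda>\<omega> n. - S \<omega> n) \<and>
          (\<forall>\<omega>\<in>space M'. cv_T (\<lambda>n. - S \<omega> n) = Sbar (\<pi> \<omega>)) \<and>
          (\<forall>S'. srw M' S' \<and> (AE \<omega> in M'. cv_T (S' \<omega>) = Sbar (\<pi> \<omega>)) \<longrightarrow>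
               (AE \<omega> in M'. S' \<omega> = S \<omega> \<or> S' \<omega> = (\<lambda>n. - S \<omega> n))) \<and>
          (\<exists>F. \<forall>\<omega>\<in>space M'. S \<omega> = F (Sbar (\<pi> \<omega>)) (S \<omega> 1)) \<and>
          prob_space.indep_set M' (gen_sigma (space M') (\<lambda>_ \<omega>. S \<omega> 1) {()})
              (gen_sigma (space M') (\<lambda>j \<omega>. Sbar (\<pi> \<omega>) j) UNIV)))"
proof (intro conjI allI impI)
  fix M :: "'a measure" and S n assume "srw M S"
  then show "sigma_sets (space M)
              (gen_sigma (space M) (\<lambda>j \<omega>. cv_T (S \<omega>) j) {..n}
               \<union> gen_sigma (space M) (\<lambda>_ \<omega>. S \<omega> 1) {()})
           = gen_sigma (space M) (\<lambda>j \<omega>. S \<omega> j) {..Suc n}" by (rule part1i)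
next
  fix M :: "'a measure" and S assume "srw M S"
  then show "prob_space.indep_set M (gen_sigma (space M) (\<lambda>_ \<omega>. S \<omega> 1) {()})
                             (gen_sigma (space M) (\<lambda>j \<omega>. cv_T (S \<omega>) j) UNIV)" by (rule part1ii)
next
  fix M :: "'a measure" and Sbar assume "srw M Sbar"
  then show "\<exists>(M'::('a \<times> bool) measure) \<pi> S.
          \<pi> \<in> measurable M' M \<and> distr M' M \<pi> = M \<and>
          srw M' S \<and>
          (\<forall>\<omega>\<in>space M'. cv_T (S \<omega>) = Sbar (\<pi> \<omega>)) \<and>
          (\<forall>\<omega>\<in>space M'. \<forall>n. \<bar>run_max_gap (Sbar (\<pi> \<omega>)) n - \<bar>S \<omega> n\<bar>\<bar> \<le> 2) \<and>
          srw M' (\<lambda>\<omega> n. - S \<omega> n) \<and>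
          (\<forall>\<omega>\<in>space M'. cv_T (\<lambda>n. - S \<omega> n) = Sbar (\<pi> \<omega>)) \<and>
          (\<forall>S'. srw M' S' \<and> (AE \<omega> in M'. cv_T (S' \<omega>) = Sbar (\<pi> \<omega>)) \<longrightarrow>
               (AE \<omega> in M'. S' \<omega> = S \<omega> \<or> S' \<omega> = (\<lambda>n. - S \<omega> n))) \<and>
          (\<exists>F. \<forall>\<omega>\<in>space M'. S \<omega> = F (Sbar (\<pi> \<omega>)) (S \<omega> 1)) \<and>
          prob_space.indep_set M' (gen_sigma (space M') (\<lambda>_ \<omega>. S \<omega> 1) {()})
              (gen_sigma (space M') (\<lambda>j \<omega>. Sbar (\<pi> \<omega>) j) UNIV)" by (rule part2)
qed

end
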